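(* Let $L_0\in\mathbb{R}^{n\times n}$ have reduced SVD $L_0=U\Sigma V^*$, let $\Omega_{\mathrm{obs}}\subset[n]\times[n]$, $\Omega\subset\Omega_{\mathrm{obs}}$, $\Gamma=\Omega_{\mathrm{obs}}\setminus\Omega$, and let $S_0'$ be a matrix supported on $\Omega$. Assume that for every matrix $M\in\mathbb{R}^{n\times n}$, $\|\mathcal{P}_T\mathcal{P}_{\Gamma^\perp}M\|_F\le n\|\mathcal{P}_{T^\perp}\mathcal{P}_{\Gamma^\perp}M\|_F$, and take $\lambda>4/n$. Then $(L_0,S_0')$ is the unique solution of \[ \text{minimize } \|L\|_*+\lambda\|S\|_1\quad\text{subject to}\quad\mathcal{P}_{\Omega_{\mathrm{obs}}}(L+S)=\mathcal{P}_{\Omega_{\mathrm{obs}}}L_0+S_0' \] if there is a triple $(W,F,D)$ obeying \[ UV^*+W+\mathcal{P}_TD=\lambda(\mathrm{sgn}(S_0')+F), \] with $\mathcal{P}_TW=0$, $\|W\|<1/2$, $\mathcal{P}_{\Gamma^\perp}F=0$, $\|F\|_\infty<1/2$, and $\|\mathcal{P}_TD\|_F\le n^{-2}$.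
   Context: $U,V\in\mathbb{R}^{n\times r}$ have orthonormal columns; $T=\{UX^*+YV^*: X,Y\in\mathbb{R}^{n\times r}\}$, $\mathcal{P}_T$ is the orthogonal projection onto $T$ (trace inner product), $\mathcal{P}_{T^\perp}=\mathcal{I}-\mathcal{P}_T$. For an index set $A$, $\mathcal{P}_A$ keeps entries in $A$ and zeroes the rest; $\mathcal{P}_{\Gamma^\perp}=\mathcal{I}-\mathcal{P}_\Gamma$. $\|W\|$ is the spectral norm, $\|\cdot\|_F$ the Frobenius norm, $\|F\|_\infty=\max_{ij}|F_{ij}|$, $\|\cdot\|_*$ the nuclear norm, $\|S\|_1=\sum_{ij}|S_{ij}|$, $\mathrm{sgn}$ the entrywise sign with $\mathrm{sgn}(0)=0$. *)

theory Defs
  imports "Jordan_Normal_Form.Matrix"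
begin

(* Real n x n matrices are represented as Jordan_Normal_Form matrices (real mat)
   in carrier_mat n n; indices [n] are {0..<n}. *)

definition frob_inner :: "real mat \<Rightarrow> real mat \<Rightarrow> real" where
  "frob_inner A B = (\<Sum>i<dim_row A. \<Sum>j<dim_col A. A $$ (i,j) * B $$ (i,j))"

definition frob_norm :: "real mat \<Rightarrow> real" where
  "frob_norm A = sqrt (frob_inner A A)"

definition vec_norm2 :: "real vec \<Rightarrow> real" where
  "vec_norm2 x = sqrt (x \<bullet> x)"

definition spec_norm :: "real mat \<Rightarrow> real" where
  "spec_norm A = Sup {vec_norm2 (A *\<^sub>v x) | x. x \<in> carrier_vec (dim_col A) \<and> vec_norm2 x \<le> 1}"

definition max_norm :: "real mat \<Rightarrow> real" where
  "max_norm A = Max ({\<bar>A $$ (i,j)\<bar> | i j. i < dim_row A \<and> j < dim_col A} \<union> {0})"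

definition l1_norm :: "real mat \<Rightarrow> real" where
  "l1_norm A = (\<Sum>i<dim_row A. \<Sum>j<dim_col A. \<bar>A $$ (i,j)\<bar>)"

definition nuc_norm :: "real mat \<Rightarrow> real" where
  "nuc_norm A = (THE s. \<exists>U S V. U \<in> carrier_mat (dim_row A) (dim_row A)
      \<and> V \<in> carrier_mat (dim_row A) (dim_row A) \<and> S \<in> carrier_mat (dim_row A) (dim_row A)
      \<and> transpose_mat U * U = 1\<^sub>m (dim_row A) \<and> transpose_mat V * V = 1\<^sub>m (dim_row A)
      \<and> diagonal_mat S \<and> (\<forall>i<dim_row A. S $$ (i,i) \<ge> 0)
      \<and> A = U * S * transpose_mat V \<and> s = (\<Sum>i<dim_row A. S $$ (i,i)))"

definition sgn_mat :: "real mat \<Rightarrow> real mat" where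
  "sgn_mat A = map_mat sgn A"

definition proj_idx :: "(nat \<times> nat) set \<Rightarrow> real mat \<Rightarrow> real mat" where
  "proj_idx A M = mat (dim_row M) (dim_col M) (\<lambda>ij. if ij \<in> A then M $$ ij else 0)"

definition tangent_space :: "nat \<Rightarrow> nat \<Rightarrow> real mat \<Rightarrow> real mat \<Rightarrow> real mat set" where
  "tangent_space n r U V = {U * transpose_mat X + Y * transpose_mat V | X Y.
       X \<in> carrier_mat n r \<and> Y \<in> carrier_mat n r}"

definition orth_proj :: "nat \<Rightarrow> real mat set \<Rightarrow> real mat \<Rightarrow> real mat" where
  "orth_proj n S M = (THE X. X \<in> S \<and> (\<forall>Y\<in>S. frob_inner (M - X) Y = 0))"

end

theory Submission
  imports Defs "HOL-Computational_Algebra.Fundamental_Theorem_Algebra" "Jordan_Normal_Form.Char_Poly" "Jordan_Normal_Form.Determinant"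
begin


lemma cs_sum:
  fixes a b :: "'a \<Rightarrow> real"
  shows "(\<Sum>i\<in>I. a i * b i)\<^sup>2 \<le> (\<Sum>i\<in>I. (a i)\<^sup>2) * (\<Sum>i\<in>I. (b i)\<^sup>2)"
proof (cases "(\<Sum>i\<in>I. (b i)\<^sup>2) > 0")
  case False
  then consider "\<And>i. i\<in>I \<Longrightarrow> b i = 0" | "infinite I"
    by (metis (mono_tags, lifting) sum_pos2 zero_le_power2 zero_less_power2)
  thus ?thesis by fastforce
next
  case True
  define r where "r = (\<Sum>i\<in>I. a i * b i) / (\<Sum>i\<in>I. (b i)\<^sup>2)"
  have "0 \<le> (\<Sum>i\<in>I. (a i - r * b i)\<^sup>2)" by (simp add: sum_nonneg)
  also have "\<dots> = (\<Sum>i\<in>I. (a i)\<^sup>2) - 2 * r * (\<Sum>i\<in>I. a i * b i) + r\<^sup>2 * (\<Sum>i\<in>I. (b i)\<^sup>2)"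
    by (simp add: algebra_simps power2_eq_square sum_distrib_left flip: sum.distrib)
  also have "\<dots> = (\<Sum>i\<in>I. (a i)\<^sup>2) - ((\<Sum>i\<in>I. a i * b i))\<^sup>2 / (\<Sum>i\<in>I. (b i)\<^sup>2)"
    by (simp add: r_def power2_eq_square)
  finally show ?thesis using True by (simp add: pos_divide_le_eq le_diff_eq)
qed

lemma sq_le_sqrt_prod:
  fixes x a b :: real
  assumes "x\<^sup>2 \<le> a * b" "0 \<le> a" "0 \<le> b"
  shows "x \<le> sqrt a * sqrt b"
proof -
  have "\<bar>x\<bar> \<le> sqrt (a*b)" using assms real_sqrt_le_mono[OF assms(1)] by simp
  thus ?thesis by (simp add: real_sqrt_mult)
qed


lemma mult_entry:
  assumes "A \<in> carrier_mat n k" "B \<in> carrier_mat k m" "i < n" "j < m"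
  shows "(A * B) $$ (i,j) = (\<Sum>l<k. A $$ (i,l) * B $$ (l,j))"
  using assms by (auto simp: scalar_prod_def lessThan_atLeast0)

lemma mult_vec_entry:
  assumes "A \<in> carrier_mat n k" "x \<in> carrier_vec k" "i < n"
  shows "(A *\<^sub>v x) $ i = (\<Sum>l<k. A $$ (i,l) * x $ l)"
  using assms by (auto simp: scalar_prod_def lessThan_atLeast0)

lemma sprod_def':
  assumes "y \<in> carrier_vec k"
  shows "x \<bullet> y = (\<Sum>l<k. x $ l * y $ l)"
  using assms by (auto simp: scalar_prod_def lessThan_atLeast0)

lemma fi_def':
  assumes "A \<in> carrier_mat n m"
  shows "frob_inner A B = (\<Sum>i<n. \<Sum>j<m. A $$ (i,j) * B $$ (i,j))"
  using assms by (auto simp: frob_inner_def)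

lemma fi_comm:
  assumes "A \<in> carrier_mat n m" "B \<in> carrier_mat n m"
  shows "frob_inner A B = frob_inner B A"
  using assms by (simp add: fi_def' mult.commute)

lemma fi_add_left:
  assumes "A \<in> carrier_mat n m" "B \<in> carrier_mat n m"
  shows "frob_inner (A + B) C = frob_inner A C + frob_inner B C"
  using assms by (simp add: frob_inner_def algebra_simps sum.distrib)

lemma fi_add_right:
  assumes "A \<in> carrier_mat n m" "B \<in> carrier_mat n m" "C \<in> carrier_mat n m"
  shows "frob_inner C (A + B) = frob_inner C A + frob_inner C B"
  using assms by (simp add: frob_inner_def algebra_simps sum.distrib)

lemma fi_minus_left:
  assumes "A \<in> carrier_mat n m" "B \<in> carrier_mat n m"
  shows "frob_inner (A - B) C = frob_inner A C - frob_inner B C"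
  using assms by (simp add: frob_inner_def algebra_simps sum_subtractf)

lemma fi_minus_right:
  assumes "A \<in> carrier_mat n m" "B \<in> carrier_mat n m" "C \<in> carrier_mat n m"
  shows "frob_inner C (A - B) = frob_inner C A - frob_inner C B"
  using assms by (simp add: frob_inner_def algebra_simps sum_subtractf)

lemma fi_smult_left:
  assumes "A \<in> carrier_mat n m"
  shows "frob_inner (c \<cdot>\<^sub>m A) B = c * frob_inner A B"
  using assms by (simp add: frob_inner_def algebra_simps sum_distrib_left)

lemma fi_smult_right:
  assumes "A \<in> carrier_mat n m" "B \<in> carrier_mat n m"
  shows "frob_inner A (c \<cdot>\<^sub>m B) = c * frob_inner A B"
  using assms by (simp add: frob_inner_def algebra_simps sum_distrib_left)

lemma fi_zero_right:
  assumes "A \<in> carrier_mat n m"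
  shows "frob_inner A (0\<^sub>m n m) = 0"
  using assms by (simp add: fi_def')

lemma fi_zero_left:
  shows "frob_inner (0\<^sub>m n m) A = 0"
  by (simp add: frob_inner_def)

lemma fi_self_nonneg: "frob_inner A A \<ge> 0"
  by (auto simp: frob_inner_def intro!: sum_nonneg)

lemma fi_self_zero:
  assumes "A \<in> carrier_mat n m" "frob_inner A A = 0"
  shows "A = 0\<^sub>m n m"
proof (rule eq_matI)
  fix i j assume ij: "i < dim_row (0\<^sub>m n m)" "j < dim_col (0\<^sub>m n m)"
  have "(\<Sum>i<n. \<Sum>j<m. A $$ (i,j) * A $$ (i,j)) = 0" using assms by (simp add: fi_def')
  hence "\<forall>i\<in>{..<n}. (\<Sum>j<m. A $$ (i,j) * A $$ (i,j)) = 0"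
    by (subst (asm) sum_nonneg_eq_0_iff) (auto intro!: sum_nonneg)
  hence "\<forall>i\<in>{..<n}. \<forall>j\<in>{..<m}. A $$ (i,j) * A $$ (i,j) = 0"
    by (subst (asm) sum_nonneg_eq_0_iff) auto
  thus "A $$ (i,j) = 0\<^sub>m n m $$ (i,j)" using ij by auto
qed (use assms in auto)

lemma fi_mult_left:
  assumes A: "A \<in> carrier_mat n k" and B: "B \<in> carrier_mat k m" and C: "C \<in> carrier_mat n m"
  shows "frob_inner (A * B) C = frob_inner B (transpose_mat A * C)"
proof -
  have "frob_inner (A * B) C = (\<Sum>i<n. \<Sum>j<m. (\<Sum>l<k. A $$ (i,l) * B $$ (l,j)) * C $$ (i,j))"
    using A B C by (simp add: fi_def'[of _ n m] mult_entry[OF A B] del: index_mult_mat)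
  also have "\<dots> = (\<Sum>i<n. \<Sum>j<m. \<Sum>l<k. A $$ (i,l) * B $$ (l,j) * C $$ (i,j))"
    by (simp add: sum_distrib_right)
  also have "\<dots> = (\<Sum>l<k. \<Sum>j<m. \<Sum>i<n. A $$ (i,l) * B $$ (l,j) * C $$ (i,j))"
    by (subst sum.swap, subst (2) sum.swap, subst sum.swap, simp)
  also have "\<dots> = (\<Sum>l<k. \<Sum>j<m. B $$ (l,j) * (\<Sum>i<n. transpose_mat A $$ (l,i) * C $$ (i,j)))"
    using A by (auto simp: sum_distrib_left intro!: sum.cong)
  also have "\<dots> = frob_inner B (transpose_mat A * C)"
    using A B C by (simp add: fi_def'[OF B] mult_entry[of _ k n _ m] del: index_mult_mat)
  finally show ?thesis .
qed

lemma fi_mult_right: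
  assumes A: "A \<in> carrier_mat n k" and B: "B \<in> carrier_mat k m" and C: "C \<in> carrier_mat n m"
  shows "frob_inner (A * B) C = frob_inner A (C * transpose_mat B)"
proof -
  have "frob_inner (A * B) C = (\<Sum>i<n. \<Sum>j<m. (\<Sum>l<k. A $$ (i,l) * B $$ (l,j)) * C $$ (i,j))"
    using A B C by (simp add: fi_def'[of _ n m] mult_entry[OF A B] del: index_mult_mat)
  also have "\<dots> = (\<Sum>i<n. \<Sum>j<m. \<Sum>l<k. A $$ (i,l) * B $$ (l,j) * C $$ (i,j))"
    by (simp add: sum_distrib_right)
  also have "\<dots> = (\<Sum>i<n. \<Sum>l<k. \<Sum>j<m. A $$ (i,l) * B $$ (l,j) * C $$ (i,j))"
    by (subst (2) sum.swap, simp)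
  also have "\<dots> = (\<Sum>i<n. \<Sum>l<k. A $$ (i,l) * (\<Sum>j<m. C $$ (i,j) * transpose_mat B $$ (j,l)))"
    using B by (auto simp: sum_distrib_left intro!: sum.cong)
  also have "\<dots> = frob_inner A (C * transpose_mat B)"
    using A B C by (simp add: fi_def'[OF A] mult_entry[of _ n m _ k] del: index_mult_mat)
  finally show ?thesis .
qed

lemma fi_cs:
  assumes "A \<in> carrier_mat n m" "B \<in> carrier_mat n m"
  shows "\<bar>frob_inner A B\<bar> \<le> frob_norm A * frob_norm B"
proof -
  let ?I = "{..<n} \<times> {..<m}"
  have e: "\<And>X Y. X \<in> carrier_mat n m \<Longrightarrow> frob_inner X Y = (\<Sum>p\<in>?I. X $$ p * Y $$ p)"
    by (simp add: fi_def' sum.cartesian_product)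
  have "(frob_inner A B)\<^sup>2 \<le> (\<Sum>p\<in>?I. (A $$ p)\<^sup>2) * (\<Sum>p\<in>?I. (B $$ p)\<^sup>2)"
    unfolding e[OF assms(1)] by (rule cs_sum)
  also have "\<dots> = frob_inner A A * frob_inner B B"
    using assms by (simp add: e power2_eq_square)
  finally have "(frob_inner A B)\<^sup>2 \<le> frob_inner A A * frob_inner B B" .
  hence "\<bar>frob_inner A B\<bar> \<le> sqrt (frob_inner A A * frob_inner B B)"
    using real_sqrt_le_mono by fastforce
  thus ?thesis by (simp add: frob_norm_def real_sqrt_mult)
qed

lemma frob_norm_nonneg: "frob_norm A \<ge> 0"
  by (simp add: frob_norm_def fi_self_nonneg)

lemma frob_norm_sq: "(frob_norm A)\<^sup>2 = frob_inner A A"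
  by (simp add: frob_norm_def fi_self_nonneg)

lemma frob_norm_zero:
  assumes "A \<in> carrier_mat n m" "frob_norm A = 0" shows "A = 0\<^sub>m n m"
  using assms fi_self_zero by (simp add: frob_norm_def fi_self_nonneg)

lemma frob_norm_triangle:
  assumes A: "A \<in> carrier_mat n m" and B: "B \<in> carrier_mat n m"
  shows "frob_norm (A + B) \<le> frob_norm A + frob_norm B"
proof -
  have "(frob_norm (A + B))\<^sup>2 = frob_inner A A + 2 * frob_inner A B + frob_inner B B"
    using assms by (simp add: frob_norm_sq fi_add_left fi_add_right fi_comm[OF B A])
  also have "\<dots> \<le> (frob_norm A)\<^sup>2 + 2 * (frob_norm A * frob_norm B) + (frob_norm B)\<^sup>2"
    using fi_cs[OF A B] by (simp add: frob_norm_sq)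
  also have "\<dots> = (frob_norm A + frob_norm B)\<^sup>2" by (simp add: power2_eq_square algebra_simps)
  finally show ?thesis
    using frob_norm_nonneg by (meson add_nonneg_nonneg power2_le_imp_le)
qed

lemma frob_norm_uminus:
  assumes A: "A \<in> carrier_mat n m"
  shows "frob_norm (- A) = frob_norm A"
  using A by (simp add: frob_norm_def fi_def')

lemma frob_norm_minus:
  assumes A: "A \<in> carrier_mat n m" and B: "B \<in> carrier_mat n m"
  shows "frob_norm (A - B) \<le> frob_norm A + frob_norm B"
proof -
  have "A - B = A + (- B)" using A B by auto
  thus ?thesis using frob_norm_triangle[OF A, of "-B"] frob_norm_uminus[OF B] B by auto
qed


lemma sprod_self_nonneg: "(x :: real vec) \<bullet> x \<ge> 0"
proof -
  have "x \<in> carrier_vec (dim_vec x)" by simp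
  show ?thesis by (subst sprod_def'[OF \<open>x \<in> carrier_vec (dim_vec x)\<close>]) (auto intro: sum_nonneg)
qed

lemma vn2_sq: "(vec_norm2 x)\<^sup>2 = x \<bullet> x"
  by (simp add: vec_norm2_def sprod_self_nonneg)

lemma vn2_nonneg: "vec_norm2 x \<ge> 0"
  by (simp add: vec_norm2_def sprod_self_nonneg)

lemma vec_cs:
  assumes "x \<in> carrier_vec k" "y \<in> carrier_vec k"
  shows "\<bar>x \<bullet> y\<bar> \<le> vec_norm2 x * vec_norm2 y"
proof -
  have "(x \<bullet> y)\<^sup>2 \<le> (\<Sum>l<k. (x $ l)\<^sup>2) * (\<Sum>l<k. (y $ l)\<^sup>2)"
    unfolding sprod_def'[OF assms(2)] by (rule cs_sum)
  also have "\<dots> = (x \<bullet> x) * (y \<bullet> y)"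
    using assms by (simp add: sprod_def' power2_eq_square)
  finally have "\<bar>x \<bullet> y\<bar> \<le> sqrt ((x \<bullet> x) * (y \<bullet> y))"
    using real_sqrt_le_mono by fastforce
  thus ?thesis by (simp add: vec_norm2_def real_sqrt_mult)
qed

lemma mat_vec_sq_le:
  assumes A: "A \<in> carrier_mat n m" and x: "x \<in> carrier_vec m"
  shows "(A *\<^sub>v x) \<bullet> (A *\<^sub>v x) \<le> frob_inner A A * (x \<bullet> x)"
proof -
  have "(A *\<^sub>v x) \<bullet> (A *\<^sub>v x) = (\<Sum>i<n. ((A *\<^sub>v x) $ i)\<^sup>2)"
    using A x by (simp add: sprod_def'[of "A *\<^sub>v x" n] power2_eq_square del: index_mult_mat_vec)
  also have "\<dots> = (\<Sum>i<n. (\<Sum>l<m. A $$ (i,l) * x $ l)\<^sup>2)"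
    using A x by (simp add: mult_vec_entry[OF A x] del: index_mult_mat_vec)
  also have "\<dots> \<le> (\<Sum>i<n. (\<Sum>l<m. (A $$ (i,l))\<^sup>2) * (\<Sum>l<m. (x $ l)\<^sup>2))"
    by (intro sum_mono cs_sum)
  also have "\<dots> = frob_inner A A * (x \<bullet> x)"
    using A x by (simp add: fi_def' sprod_def'[OF x] power2_eq_square sum_distrib_right)
  finally show ?thesis .
qed

lemma mat_vec_norm_le:
  assumes A: "A \<in> carrier_mat n m" and x: "x \<in> carrier_vec m"
  shows "vec_norm2 (A *\<^sub>v x) \<le> frob_norm A * vec_norm2 x"
proof -
  have "vec_norm2 (A *\<^sub>v x) \<le> sqrt (frob_inner A A * (x \<bullet> x))"
    unfolding vec_norm2_def using mat_vec_sq_le[OF A x] real_sqrt_le_mono by blast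
  thus ?thesis by (simp add: frob_norm_def vec_norm2_def real_sqrt_mult)
qed

lemma spec_set_bdd:
  assumes A: "A \<in> carrier_mat n m"
  shows "bdd_above {vec_norm2 (A *\<^sub>v x) | x. x \<in> carrier_vec (dim_col A) \<and> vec_norm2 x \<le> 1}"
proof (rule bdd_aboveI[where M = "frob_norm A"], clarify)
  fix x :: "real vec" assume x: "x \<in> carrier_vec (dim_col A)" "vec_norm2 x \<le> 1"
  have "vec_norm2 (A *\<^sub>v x) \<le> frob_norm A * vec_norm2 x"
    using A x by (intro mat_vec_norm_le) auto
  also have "\<dots> \<le> frob_norm A" using x frob_norm_nonneg[of A]
    by (simp add: mult_left_le)
  finally show "vec_norm2 (A *\<^sub>v x) \<le> frob_norm A" .
qed

lemma spec_ge:
  assumes A: "A \<in> carrier_mat n m" and x: "x \<in> carrier_vec m" "vec_norm2 x \<le> 1"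
  shows "vec_norm2 (A *\<^sub>v x) \<le> spec_norm A"
  unfolding spec_norm_def
  by (rule cSup_upper[OF _ spec_set_bdd[OF A]]) (use A x in auto)

lemma zero_vn2: "vec_norm2 (0\<^sub>v m) = 0"
  by (simp add: vec_norm2_def)

lemma spec_le:
  assumes A: "A \<in> carrier_mat n m"
    and B: "\<And>x. x \<in> carrier_vec m \<Longrightarrow> vec_norm2 x \<le> 1 \<Longrightarrow> vec_norm2 (A *\<^sub>v x) \<le> b"
  shows "spec_norm A \<le> b"
  unfolding spec_norm_def
proof (rule cSup_least)
  show "{vec_norm2 (A *\<^sub>v x) | x. x \<in> carrier_vec (dim_col A) \<and> vec_norm2 x \<le> 1} \<noteq> {}"
    using A zero_vn2[of m] by (auto intro!: exI[of _ "0\<^sub>v m"])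
qed (use A B in auto)

lemma spec_nonneg:
  assumes A: "A \<in> carrier_mat n m"
  shows "spec_norm A \<ge> 0"
proof -
  have "vec_norm2 (A *\<^sub>v 0\<^sub>v m) \<le> spec_norm A"
    using spec_ge[OF A zero_carrier_vec[of m]] zero_vn2[of m] by simp
  thus ?thesis using vn2_nonneg[of "A *\<^sub>v 0\<^sub>v m"] by linarith
qed

lemma spec_le_frob:
  assumes A: "A \<in> carrier_mat n m"
  shows "spec_norm A \<le> frob_norm A"
proof (rule spec_le[OF A])
  fix x :: "real vec" assume x: "x \<in> carrier_vec m" "vec_norm2 x \<le> 1"
  have "vec_norm2 (A *\<^sub>v x) \<le> frob_norm A * vec_norm2 x" by (rule mat_vec_norm_le[OF A x(1)])
  also have "\<dots> \<le> frob_norm A" using x frob_norm_nonneg[of A] by (simp add: mult_left_le)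
  finally show "vec_norm2 (A *\<^sub>v x) \<le> frob_norm A" .
qed

lemma spec_bilin:
  assumes A: "A \<in> carrier_mat n m" and u: "u \<in> carrier_vec n" "vec_norm2 u \<le> 1"
    and v: "v \<in> carrier_vec m" "vec_norm2 v \<le> 1"
  shows "\<bar>u \<bullet> (A *\<^sub>v v)\<bar> \<le> spec_norm A"
proof -
  have "\<bar>u \<bullet> (A *\<^sub>v v)\<bar> \<le> vec_norm2 u * vec_norm2 (A *\<^sub>v v)"
    using A u v by (intro vec_cs) auto
  also have "\<dots> \<le> 1 * spec_norm A"
    using spec_ge[OF A v] u vn2_nonneg by (intro mult_mono) auto
  finally show ?thesis by simp
qed

lemma frob_smult:
  assumes A: "A \<in> carrier_mat n m"
  shows "frob_norm (c \<cdot>\<^sub>m A) = \<bar>c\<bar> * frob_norm A"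
proof -
  have "frob_inner (c \<cdot>\<^sub>m A) (c \<cdot>\<^sub>m A) = c\<^sup>2 * frob_inner A A"
    using A by (simp add: fi_smult_left fi_smult_right power2_eq_square)
  thus ?thesis by (simp add: frob_norm_def real_sqrt_mult)
qed


lemma real_sym_eigvec:
  fixes A :: "real mat"
  assumes A: "A \<in> carrier_mat n n" and sym: "transpose_mat A = A" and n: "0 < n"
  shows "\<exists>\<mu> v. v \<in> carrier_vec n \<and> v \<noteq> 0\<^sub>v n \<and> A *\<^sub>v v = \<mu> \<cdot>\<^sub>v v"
proof -
  define C :: "complex mat" where "C = of_real_hom.mat_hom A"
  have C: "C \<in> carrier_mat n n" using A by (simp add: C_def)
  have Cij: "\<And>i j. i < n \<Longrightarrow> j < n \<Longrightarrow> C $$ (i,j) = complex_of_real (A $$ (i,j))"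
    using A by (simp add: C_def)
  have symA: "\<And>i j. i < n \<Longrightarrow> j < n \<Longrightarrow> A $$ (i,j) = A $$ (j,i)"
    using A sym by (metis carrier_matD index_transpose_mat(1))
  have cp: "char_poly C = map_poly of_real (char_poly A)"
    unfolding C_def by (rule of_real_hom.char_poly_hom[OF A])
  have "degree (char_poly C) = n" using degree_monic_char_poly[OF C] by simp
  then obtain lam where "poly (char_poly C) lam = 0"
    using n alg_closed_imp_poly_has_root by (metis neq0_conv)
  hence "eigenvalue C lam" using eigenvalue_root_char_poly[OF C] by simp
  then obtain v where ev: "eigenvector C v lam" unfolding eigenvalue_def by blast
  hence v: "v \<in> carrier_vec n" "v \<noteq> 0\<^sub>v n" "C *\<^sub>v v = lam \<cdot>\<^sub>v v"
    using C unfolding eigenvector_def by auto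
  define q where "q = (\<Sum>i<n. \<Sum>j<n. cnj (v $ i) * C $$ (i,j) * v $ j)"
  define s where "s = (\<Sum>i<n. cnj (v $ i) * v $ i)"
  have "q = (\<Sum>i<n. cnj (v $ i) * (C *\<^sub>v v) $ i)"
    unfolding q_def using C v(1)
    by (auto simp: scalar_prod_def lessThan_atLeast0 sum_distrib_left mult.assoc intro!: sum.cong)
  also have "\<dots> = lam * s" unfolding s_def using v
    by (auto simp: sum_distrib_left intro!: sum.cong)
  finally have qs: "q = lam * s" .
  have "cnj q = (\<Sum>i<n. \<Sum>j<n. v $ i * C $$ (i,j) * cnj (v $ j))"
    unfolding q_def by (simp add: Cij)
  also have "\<dots> = (\<Sum>j<n. \<Sum>i<n. v $ i * C $$ (i,j) * cnj (v $ j))"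
    by (rule sum.swap)
  also have "\<dots> = q" unfolding q_def
    by (auto simp: Cij symA intro!: sum.cong)
  finally have cq: "cnj q = q" .
  have sre: "s = complex_of_real (\<Sum>i<n. (Re (v $ i))\<^sup>2 + (Im (v $ i))\<^sup>2)"
    unfolding s_def by (simp add: complex_mult_cnj mult.commute[of "cnj _"])
  obtain i where i: "i < n" "v $ i \<noteq> 0"
    using v by (metis eq_vecI carrier_vecD index_zero_vec)
  have "(\<Sum>i<n. (Re (v $ i))\<^sup>2 + (Im (v $ i))\<^sup>2) > 0"
    by (rule sum_pos2[of _ i]) (use i in \<open>auto simp: sum_power2_gt_zero_iff complex_eq_iff\<close>)
  hence s0: "s \<noteq> 0" by (simp only: sre of_real_eq_0_iff)
  have cs: "cnj s = s" by (simp only: sre complex_cnj_complex_of_real)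
  have "cnj lam = lam"
  proof -
    have "lam = q / s" using qs s0 by simp
    thus ?thesis using cq cs by simp
  qed
  hence "lam \<in> \<real>" using Reals_cnj_iff by blast
  hence lam: "lam = of_real (Re lam)" by (simp add: of_real_Re)
  have "complex_of_real (poly (char_poly A) (Re lam)) = 0"
    using \<open>poly (char_poly C) lam = 0\<close> lam cp by (metis of_real_hom.poly_map_poly)
  hence "poly (char_poly A) (Re lam) = 0" by simp
  hence "eigenvalue A (Re lam)" using eigenvalue_root_char_poly[OF A] by simp
  then obtain w where "eigenvector A w (Re lam)" unfolding eigenvalue_def by blast
  thus ?thesis using A unfolding eigenvector_def by auto
qed


lemma delta_l: "(\<Sum>k<(n::nat). (if i = k then 1 else 0) * (g k::real)) = (if i < n then g i else 0)"
proof -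
  have "(\<Sum>k<n. (if i = k then 1 else 0) * g k) = (\<Sum>k<n. if i = k then g k else 0)"
    by (rule sum.cong) auto
  thus ?thesis by simp
qed

lemma delta_r: "(\<Sum>k<(n::nat). (g k::real) * (if k = j then 1 else 0)) = (if j < n then g j else 0)"
proof -
  have "(\<Sum>k<n. g k * (if k = j then 1 else 0)) = (\<Sum>k<n. if k = j then g k else 0)"
    by (rule sum.cong) auto
  thus ?thesis by simp
qed

definition orthm :: "nat \<Rightarrow> real mat \<Rightarrow> bool" where
  "orthm n Q \<longleftrightarrow> Q \<in> carrier_mat n n \<and> transpose_mat Q * Q = 1\<^sub>m n"

lemma orthm_carrier: "orthm n Q \<Longrightarrow> Q \<in> carrier_mat n n"
  by (simp add: orthm_def)

lemma orthm_TQ: "orthm n Q \<Longrightarrow> transpose_mat Q * Q = 1\<^sub>m n"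
  by (simp add: orthm_def)

lemma orthm_QT: "orthm n Q \<Longrightarrow> Q * transpose_mat Q = 1\<^sub>m n"
  unfolding orthm_def by (metis mat_mult_left_right_inverse transpose_carrier_mat)

lemma orthm_transpose: "orthm n Q \<Longrightarrow> orthm n (transpose_mat Q)"
  using orthm_QT by (simp add: orthm_def)

lemma orthm_one: "orthm n (1\<^sub>m n)"
  by (simp add: orthm_def)

lemma orthm_mult:
  assumes P: "orthm n P" and Q: "orthm n Q"
  shows "orthm n (P * Q)"
proof -
  have Pc: "P \<in> carrier_mat n n" and Qc: "Q \<in> carrier_mat n n"
    using P Q by (auto simp: orthm_def)
  have "transpose_mat (P * Q) * (P * Q) = transpose_mat Q * (transpose_mat P * P) * Q"
    using Pc Qc by (simp add: transpose_mult assoc_mult_mat[of _ n n _ n _ n])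
  also have "\<dots> = 1\<^sub>m n" using orthm_TQ[OF P] orthm_TQ[OF Q] Qc by simp
  finally show ?thesis using Pc Qc by (simp add: orthm_def)
qed

lemma mult_unit_vec:
  assumes "(Q :: real mat) \<in> carrier_mat n k" "i < k"
  shows "Q *\<^sub>v unit_vec k i = col Q i"
proof (rule eq_vecI)
  fix l assume l: "l < dim_vec (col Q i)"
  hence "l < n" using assms by auto
  thus "(Q *\<^sub>v unit_vec k i) $ l = col Q i $ l"
    using assms by (simp add: mult_vec_entry[OF assms(1)] delta_r del: index_mult_mat_vec)
qed (use assms in auto)

lemma vec_self_zero:
  assumes x: "(x :: real vec) \<in> carrier_vec k" and "x \<bullet> x = 0"
  shows "x = 0\<^sub>v k"
proof (rule eq_vecI)
  fix i assume i: "i < dim_vec (0\<^sub>v k)"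
  have "(\<Sum>l<k. x $ l * x $ l) = 0" using assms by (simp add: sprod_def')
  hence "\<forall>l\<in>{..<k}. x $ l * x $ l = 0"
    by (subst (asm) sum_nonneg_eq_0_iff) auto
  thus "x $ i = 0\<^sub>v k $ i" using i by auto
qed (use x in auto)

lemma normalize_vec:
  assumes x: "(x :: real vec) \<in> carrier_vec k" "x \<noteq> 0\<^sub>v k"
  shows "\<exists>c. c > 0 \<and> (c \<cdot>\<^sub>v x) \<bullet> (c \<cdot>\<^sub>v x) = 1"
proof -
  have p: "x \<bullet> x > 0" using vec_self_zero[OF x(1)] x(2) sprod_self_nonneg[of x]
    by force
  define c where "c = 1 / sqrt (x \<bullet> x)"
  have "(c \<cdot>\<^sub>v x) \<bullet> (c \<cdot>\<^sub>v x) = c * c * (x \<bullet> x)" using x by simp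
  also have "\<dots> = 1" using p by (simp add: c_def)
  finally show ?thesis using p c_def by (intro exI[of _ c]) auto
qed

lemma householder:
  assumes v: "v \<in> carrier_vec n" "v \<bullet> v = 1" and n: "0 < n"
  shows "\<exists>H. orthm n H \<and> H *\<^sub>v unit_vec n 0 = v"
proof (cases "v = unit_vec n 0")
  case True
  thus ?thesis by (intro exI[of _ "1\<^sub>m n"]) (simp add: orthm_one)
next
  case False
  define e :: "real vec" where "e = unit_vec n 0"
  define w where "w = v - e"
  have e: "e \<in> carrier_vec n" by (simp add: e_def)
  have w: "w \<in> carrier_vec n" using v e by (simp add: w_def)
  have wi: "\<And>i. i < n \<Longrightarrow> w $ i = v $ i - (if i = 0 then 1 else 0)"
    using v by (simp add: w_def e_def)
  have "w \<noteq> 0\<^sub>v n"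
  proof
    assume "w = 0\<^sub>v n"
    hence "\<And>i. i < n \<Longrightarrow> v $ i = e $ i" using wi n by (simp add: e_def)
    hence "v = e" using v e by (intro eq_vecI) auto
    thus False using False e_def by simp
  qed
  hence wpos: "w \<bullet> w > 0" using vec_self_zero[OF w] sprod_self_nonneg[of w] by force
  have "w \<bullet> w = (\<Sum>l<n. (v $ l - (if l = 0 then 1 else 0)) * (v $ l - (if l = 0 then 1 else 0)))"
    using w wi by (simp add: sprod_def')
  also have "\<dots> = (\<Sum>l<n. v $ l * v $ l) - 2 * (\<Sum>l<n. v $ l * (if l = 0 then 1 else 0))
      + (\<Sum>l<n. (if 0 = l then 1 else 0) * (if l = 0 then 1 else 0))"
    unfolding sum_distrib_left sum_subtractf[symmetric] sum.distrib[symmetric]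
    by (intro sum.cong refl) (auto simp: algebra_simps)
  also have "\<dots> = 2 - 2 * v $ 0"
    using v n by (simp add: delta_r delta_l sprod_def'[OF v(1), symmetric])
  finally have ww: "w \<bullet> w = 2 - 2 * v $ 0" .
  define c where "c = 2 / (w \<bullet> w)"
  have w0: "w $ 0 = v $ 0 - 1" using wi[OF n] by simp
  have nz: "2 - 2 * v $ 0 \<noteq> 0" using wpos ww by simp
  have "c * w $ 0 = 2 * (v $ 0 - 1) / (2 - 2 * v $ 0)" by (simp add: c_def ww w0)
  also have "\<dots> = -1" using nz by (simp add: divide_simps)
  finally have cw0: "c * w $ 0 = -1" .
  have ccw: "c * c * (w \<bullet> w) = 2 * c" using wpos unfolding c_def by (simp add: field_simps)
  define H where "H = mat n n (\<lambda>(i,j). (if i = j then 1 else 0) - c * (w $ i * w $ j))"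
  have Hc: "H \<in> carrier_mat n n" by (simp add: H_def)
  have HT: "transpose_mat H = H" by (intro eq_matI) (auto simp: H_def mult.commute)
  have HH: "H * H = 1\<^sub>m n"
  proof (rule eq_matI)
    fix i j assume ij: "i < dim_row (1\<^sub>m n)" "j < dim_col (1\<^sub>m n)"
    hence ij: "i < n" "j < n" by auto
    have "(H * H) $$ (i,j) = (\<Sum>k<n. ((if i = k then 1 else 0) - c * (w $ i * w $ k))
          * ((if k = j then 1 else 0) - c * (w $ k * w $ j)))"
      using ij by (subst mult_entry[OF Hc Hc ij]) (simp add: H_def)
    also have "\<dots> = (\<Sum>k<n. (if i = k then 1 else 0) * ((if k = j then 1 else 0)))
       - c * w $ j * (\<Sum>k<n. (if i = k then 1 else 0) * w $ k)
       - c * w $ i * (\<Sum>k<n. w $ k * (if k = j then 1 else 0))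
       + c * c * w $ i * w $ j * (\<Sum>k<n. w $ k * w $ k)"
      unfolding sum_distrib_left sum_subtractf[symmetric] sum.distrib[symmetric]
      by (intro sum.cong refl) (auto simp: algebra_simps)
    also have "\<dots> = (if i = j then 1 else 0) - 2 * c * w $ i * w $ j + c * c * (w \<bullet> w) * w $ i * w $ j"
      using ij by (simp add: delta_l delta_r sprod_def'[OF w, symmetric])
    also have "\<dots> = 1\<^sub>m n $$ (i,j)" using ij ccw by simp
    finally show "(H * H) $$ (i,j) = 1\<^sub>m n $$ (i,j)" .
  qed (auto simp: H_def)
  have "H *\<^sub>v unit_vec n 0 = v"
  proof (rule eq_vecI)
    fix i assume "i < dim_vec v"
    hence i: "i < n" using v by auto
    have "(H *\<^sub>v unit_vec n 0) $ i = H $$ (i, 0)" using Hc n i by (simp add: mult_unit_vec)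
    also have "\<dots> = (if i = 0 then 1 else 0) - (c * w $ 0) * w $ i" using i n by (simp add: H_def)
    also have "\<dots> = v $ i" using cw0 wi[OF i] by simp
    finally show "(H *\<^sub>v unit_vec n 0) $ i = v $ i" .
  qed (use Hc v in auto)
  thus ?thesis using Hc HT HH by (intro exI[of _ H]) (simp add: orthm_def)
qed


definition ext1 :: "real \<Rightarrow> real mat \<Rightarrow> real mat" where
  "ext1 c M = mat (Suc (dim_row M)) (Suc (dim_col M))
     (\<lambda>(i,j). if i = 0 then (if j = 0 then c else 0) else if j = 0 then 0 else M $$ (i - 1, j - 1))"

lemma ext1_carrier: "M \<in> carrier_mat m k \<Longrightarrow> ext1 c M \<in> carrier_mat (Suc m) (Suc k)"
  by (simp add: ext1_def)

lemma ext1_mult: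
  assumes M: "M \<in> carrier_mat m k" and N: "N \<in> carrier_mat k p"
  shows "ext1 a M * ext1 b N = ext1 (a * b) (M * N)"
proof (rule eq_matI)
  fix i j assume ij: "i < dim_row (ext1 (a * b) (M * N))" "j < dim_col (ext1 (a * b) (M * N))"
  hence ij': "i < Suc m" "j < Suc p" using M N by (auto simp: ext1_def)
  have "(ext1 a M * ext1 b N) $$ (i,j) = (\<Sum>l<Suc k. ext1 a M $$ (i,l) * ext1 b N $$ (l,j))"
    by (rule mult_entry[OF ext1_carrier[OF M] ext1_carrier[OF N] ij'])
  also have "\<dots> = ext1 a M $$ (i,0) * ext1 b N $$ (0,j) + (\<Sum>l<k. ext1 a M $$ (i,Suc l) * ext1 b N $$ (Suc l,j))"
    by (rule sum.lessThan_Suc_shift)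
  also have "\<dots> = ext1 (a * b) (M * N) $$ (i,j)"
  proof (cases i)
    case 0 thus ?thesis using M N ij' by (cases j) (auto simp: ext1_def)
  next
    case (Suc i')
    thus ?thesis using M N ij' by (cases j) (auto simp: ext1_def scalar_prod_def lessThan_atLeast0)
  qed
  finally show "(ext1 a M * ext1 b N) $$ (i,j) = ext1 (a * b) (M * N) $$ (i,j)" .
qed (use M N in \<open>auto simp: ext1_def\<close>)

lemma ext1_transpose: "transpose_mat (ext1 c M) = ext1 c (transpose_mat M)"
  by (intro eq_matI) (auto simp: ext1_def)

lemma ext1_one: "ext1 1 (1\<^sub>m m) = 1\<^sub>m (Suc m)"
  by (intro eq_matI) (auto simp: ext1_def)

lemma ext1_orthm: assumes "orthm m Q" shows "orthm (Suc m) (ext1 1 Q)"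
proof -
  have Q: "Q \<in> carrier_mat m m" using assms by (simp add: orthm_def)
  have "transpose_mat (ext1 1 Q) * ext1 1 Q = ext1 1 (transpose_mat Q * Q)"
    using Q by (simp add: ext1_transpose ext1_mult[of _ m m _ m])
  also have "\<dots> = 1\<^sub>m (Suc m)" using orthm_TQ[OF assms] ext1_one by simp
  finally show ?thesis using Q ext1_carrier by (simp add: orthm_def)
qed

lemma ext1_diag: "diagonal_mat M \<Longrightarrow> diagonal_mat (ext1 c M)"
  unfolding diagonal_mat_def
proof (intro allI impI)
  fix i j assume d: "\<forall>i<dim_row M. \<forall>j<dim_col M. i \<noteq> j \<longrightarrow> M $$ (i, j) = 0"
    and i: "i < dim_row (ext1 c M)" and j: "j < dim_col (ext1 c M)" and ij: "i \<noteq> j"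
  show "ext1 c M $$ (i, j) = 0"
    using d i j ij by (cases i; cases j) (auto simp: ext1_def)
qed

lemma ext1_diag_entries:
  assumes "M \<in> carrier_mat m m" "i < Suc m"
  shows "ext1 c M $$ (i,i) = (if i = 0 then c else M $$ (i - 1, i - 1))"
  using assms by (simp add: ext1_def)

lemma sing_pair:
  assumes A: "(A :: real mat) \<in> carrier_mat n n" and n: "0 < n"
  shows "\<exists>\<sigma> u v. \<sigma> \<ge> 0 \<and> u \<in> carrier_vec n \<and> v \<in> carrier_vec n \<and> u \<bullet> u = 1 \<and> v \<bullet> v = 1
     \<and> A *\<^sub>v v = \<sigma> \<cdot>\<^sub>v u \<and> transpose_mat A *\<^sub>v u = \<sigma> \<cdot>\<^sub>v v"
proof -
  define B where "B = transpose_mat A * A"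
  have B: "B \<in> carrier_mat n n" using A by (auto simp: B_def)
  have Bs: "transpose_mat B = B" using A transpose_mult[of "transpose_mat A" n n A n] by (simp add: B_def)
  obtain \<mu> v0 where v0: "v0 \<in> carrier_vec n" "v0 \<noteq> 0\<^sub>v n" "B *\<^sub>v v0 = \<mu> \<cdot>\<^sub>v v0"
    using real_sym_eigvec[OF B Bs n] by blast
  obtain c where c: "c > 0" "(c \<cdot>\<^sub>v v0) \<bullet> (c \<cdot>\<^sub>v v0) = 1" using normalize_vec[OF v0(1,2)] by blast
  define v where "v = c \<cdot>\<^sub>v v0"
  have v: "v \<in> carrier_vec n" "v \<bullet> v = 1" using v0 c by (auto simp: v_def)
  have vnz: "v \<noteq> 0\<^sub>v n" using v by auto
  have Bv: "B *\<^sub>v v = \<mu> \<cdot>\<^sub>v v" using v0 B by (simp add: v_def mult_mat_vec smult_smult_assoc mult.commute)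
  show ?thesis
  proof (cases "A *\<^sub>v v = 0\<^sub>v n")
    case True
    have "det A = 0" using det_0_iff_vec_prod_zero[OF A] True v(1) vnz by blast
    hence "det (transpose_mat A) = 0" using det_transpose[OF A] by simp
    then obtain u0 where u0: "u0 \<in> carrier_vec n" "u0 \<noteq> 0\<^sub>v n" "transpose_mat A *\<^sub>v u0 = 0\<^sub>v n"
      using det_0_iff_vec_prod_zero[of "transpose_mat A" n] A by auto
    obtain d where d: "d > 0" "(d \<cdot>\<^sub>v u0) \<bullet> (d \<cdot>\<^sub>v u0) = 1" using normalize_vec[OF u0(1,2)] by blast
    define u where "u = d \<cdot>\<^sub>v u0"
    have u: "u \<in> carrier_vec n" "u \<bullet> u = 1" using u0 d by (auto simp: u_def)
    have Atu: "transpose_mat A *\<^sub>v u = 0\<^sub>v n"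
    proof -
      have "transpose_mat A *\<^sub>v u = d \<cdot>\<^sub>v (transpose_mat A *\<^sub>v u0)"
        using u0 A by (simp add: u_def mult_mat_vec[of _ n n])
      also have "\<dots> = 0\<^sub>v n" using u0(3) by (intro eq_vecI) auto
      finally show ?thesis .
    qed
    have z1: "(0::real) \<cdot>\<^sub>v u = 0\<^sub>v n" using u by (intro eq_vecI) auto
    have z2: "(0::real) \<cdot>\<^sub>v v = 0\<^sub>v n" using v by (intro eq_vecI) auto
    show ?thesis using u v True Atu z1 z2
      by (intro exI[of _ 0] exI[of _ u] exI[of _ v]) auto
  next
    case False
    have Av: "A *\<^sub>v v \<in> carrier_vec n" using A v by auto
    have pos: "(A *\<^sub>v v) \<bullet> (A *\<^sub>v v) > 0"
      using vec_self_zero[OF Av] False sprod_self_nonneg[of "A *\<^sub>v v"] by force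
    define \<sigma> where "\<sigma> = sqrt ((A *\<^sub>v v) \<bullet> (A *\<^sub>v v))"
    have sp: "\<sigma> > 0" using pos by (simp add: \<sigma>_def)
    have ss: "\<sigma> * \<sigma> = (A *\<^sub>v v) \<bullet> (A *\<^sub>v v)" using pos by (simp add: \<sigma>_def)
    define u where "u = (1 / \<sigma>) \<cdot>\<^sub>v (A *\<^sub>v v)"
    have u: "u \<in> carrier_vec n" using Av by (simp add: u_def)
    have uu: "u \<bullet> u = 1" using Av sp ss pos by (simp add: u_def)
    have Avu: "A *\<^sub>v v = \<sigma> \<cdot>\<^sub>v u" using sp Av by (simp add: u_def smult_smult_assoc)
    have "\<mu> = \<mu> * (v \<bullet> v)" using v by simp
    also have "\<dots> = v \<bullet> (B *\<^sub>v v)" using v Bv by simp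
    also have "\<dots> = (transpose_mat A *\<^sub>v (A *\<^sub>v v)) \<bullet> v"
    proof -
      have "B *\<^sub>v v = transpose_mat A *\<^sub>v (A *\<^sub>v v)" using A v by (simp add: B_def)
      moreover have "B *\<^sub>v v \<in> carrier_vec n" using B v by simp
      ultimately show ?thesis using comm_scalar_prod[OF v(1), of "B *\<^sub>v v"] by simp
    qed
    also have "\<dots> = (A *\<^sub>v v) \<bullet> (A *\<^sub>v v)"
      by (rule transpose_vec_mult_scalar[OF A v(1) Av])
    finally have mu: "\<mu> = \<sigma> * \<sigma>" using ss by simp
    have "transpose_mat A *\<^sub>v u = (1 / \<sigma>) \<cdot>\<^sub>v (B *\<^sub>v v)"
      using A v by (simp add: u_def B_def mult_mat_vec[of _ n n])
    also have "\<dots> = \<sigma> \<cdot>\<^sub>v v" using Bv mu sp by (simp add: smult_smult_assoc)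
    finally show ?thesis using sp u v uu Avu
      by (intro exI[of _ \<sigma>] exI[of _ u] exI[of _ v]) auto
  qed
qed

lemma svd_exists:
  "(A :: real mat) \<in> carrier_mat n n \<Longrightarrow> \<exists>P S Q. orthm n P \<and> orthm n Q \<and> S \<in> carrier_mat n n
     \<and> diagonal_mat S \<and> (\<forall>i<n. S $$ (i,i) \<ge> 0) \<and> A = P * S * transpose_mat Q"
proof (induction n arbitrary: A)
  case 0
  have "A = 1\<^sub>m 0 * 1\<^sub>m 0 * transpose_mat (1\<^sub>m 0)" using 0 by (intro eq_matI) auto
  thus ?case by (intro exI[of _ "1\<^sub>m 0"]) (auto simp: orthm_one diagonal_mat_def)
next
  case (Suc m)
  let ?n = "Suc m"
  have A: "A \<in> carrier_mat ?n ?n" by fact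
  obtain \<sigma> u v where sv: "\<sigma> \<ge> 0" "u \<in> carrier_vec ?n" "v \<in> carrier_vec ?n" "u \<bullet> u = 1" "v \<bullet> v = 1"
     "A *\<^sub>v v = \<sigma> \<cdot>\<^sub>v u" "transpose_mat A *\<^sub>v u = \<sigma> \<cdot>\<^sub>v v"
    using sing_pair[OF A] by auto
  obtain H1 where H1: "orthm ?n H1" "H1 *\<^sub>v unit_vec ?n 0 = u" using householder[OF sv(2,4)] by auto
  obtain H2 where H2: "orthm ?n H2" "H2 *\<^sub>v unit_vec ?n 0 = v" using householder[OF sv(3,5)] by auto
  have H1c: "H1 \<in> carrier_mat ?n ?n" and H2c: "H2 \<in> carrier_mat ?n ?n"
    using H1 H2 by (auto simp: orthm_def)
  define e :: "real vec" where "e = unit_vec ?n 0"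
  have e: "e \<in> carrier_vec ?n" by (simp add: e_def)
  define B where "B = transpose_mat H1 * A * H2"
  have Bc: "B \<in> carrier_mat ?n ?n" using H1c H2c A by (simp add: B_def)
  have "B *\<^sub>v e = transpose_mat H1 *\<^sub>v (A *\<^sub>v (H2 *\<^sub>v e))"
    using H1c H2c A e by (simp add: B_def assoc_mult_mat_vec[of _ ?n ?n _ ?n])
  also have "\<dots> = \<sigma> \<cdot>\<^sub>v (transpose_mat H1 *\<^sub>v (H1 *\<^sub>v e))"
    using H1c H2 sv(2,6) H1(2) by (simp add: e_def mult_mat_vec[of _ ?n ?n])
  also have "transpose_mat H1 *\<^sub>v (H1 *\<^sub>v e) = e"
    using H1c e orthm_TQ[OF H1(1)] by (simp flip: assoc_mult_mat_vec)
  finally have Bcol: "B *\<^sub>v e = \<sigma> \<cdot>\<^sub>v e" .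
  have BT: "transpose_mat B = transpose_mat H2 * transpose_mat A * H1"
    using H1c H2c A by (simp add: B_def transpose_mult[of _ ?n ?n _ ?n] assoc_mult_mat[of _ ?n ?n _ ?n _ ?n])
  have "transpose_mat B *\<^sub>v e = transpose_mat H2 *\<^sub>v (transpose_mat A *\<^sub>v (H1 *\<^sub>v e))"
    using H1c H2c A e by (simp add: BT assoc_mult_mat_vec[of _ ?n ?n _ ?n])
  also have "\<dots> = \<sigma> \<cdot>\<^sub>v (transpose_mat H2 *\<^sub>v (H2 *\<^sub>v e))"
    using H2c H1 sv(3,7) H2(2) by (simp add: e_def mult_mat_vec[of _ ?n ?n])
  also have "transpose_mat H2 *\<^sub>v (H2 *\<^sub>v e) = e"
    using H2c e orthm_TQ[OF H2(1)] by (simp flip: assoc_mult_mat_vec)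
  finally have Brow: "transpose_mat B *\<^sub>v e = \<sigma> \<cdot>\<^sub>v e" .
  have Bi0: "\<And>i. i < ?n \<Longrightarrow> B $$ (i,0) = (if i = 0 then \<sigma> else 0)"
  proof -
    fix i assume i: "i < ?n"
    have "B $$ (i,0) = (B *\<^sub>v e) $ i" using Bc i by (simp add: e_def mult_unit_vec)
    thus "B $$ (i,0) = (if i = 0 then \<sigma> else 0)" using Bcol i by (simp add: e_def)
  qed
  have B0j: "\<And>j. j < ?n \<Longrightarrow> B $$ (0,j) = (if j = 0 then \<sigma> else 0)"
  proof -
    fix j assume j: "j < ?n"
    have "B $$ (0,j) = (transpose_mat B *\<^sub>v e) $ j"
      using Bc j by (simp add: e_def mult_unit_vec[of _ ?n ?n])
    thus "B $$ (0,j) = (if j = 0 then \<sigma> else 0)" using Brow j by (simp add: e_def)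
  qed
  define B4 where "B4 = mat m m (\<lambda>(i,j). B $$ (Suc i, Suc j))"
  have B4c: "B4 \<in> carrier_mat m m" by (simp add: B4_def)
  have Bext: "B = ext1 \<sigma> B4"
  proof (rule eq_matI)
    fix i j assume ij: "i < dim_row (ext1 \<sigma> B4)" "j < dim_col (ext1 \<sigma> B4)"
    hence ij: "i < ?n" "j < ?n" using B4c by (auto simp: ext1_def)
    show "B $$ (i,j) = ext1 \<sigma> B4 $$ (i,j)"
      using ij Bi0 B0j by (cases i; cases j) (auto simp: ext1_def B4_def)
  qed (use Bc B4c in \<open>auto simp: ext1_def\<close>)
  obtain P' S' Q' where IH: "orthm m P'" "orthm m Q'" "S' \<in> carrier_mat m m" "diagonal_mat S'"
    "\<forall>i<m. S' $$ (i,i) \<ge> 0" "B4 = P' * S' * transpose_mat Q'"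
    using Suc.IH[OF B4c] by blast
  have P'c: "P' \<in> carrier_mat m m" and Q'c: "Q' \<in> carrier_mat m m"
    using IH by (auto simp: orthm_def)
  define P where "P = H1 * ext1 1 P'"
  define S where "S = ext1 \<sigma> S'"
  define Q where "Q = H2 * ext1 1 Q'"
  have X: "ext1 1 P' \<in> carrier_mat ?n ?n" "ext1 \<sigma> S' \<in> carrier_mat ?n ?n" "ext1 1 Q' \<in> carrier_mat ?n ?n"
    using P'c Q'c IH(3) by (auto intro: ext1_carrier)
  have "B = ext1 1 P' * ext1 \<sigma> S' * transpose_mat (ext1 1 Q')"
    using P'c Q'c IH(3) by (simp add: Bext IH(6) ext1_transpose ext1_mult[of _ m m _ m])
  hence "H1 * B * transpose_mat H2 = H1 * (ext1 1 P' * ext1 \<sigma> S' * transpose_mat (ext1 1 Q')) * transpose_mat H2"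
    by simp
  moreover have "H1 * B * transpose_mat H2 = A"
  proof -
    have "H1 * B * transpose_mat H2 = (H1 * transpose_mat H1) * A * (H2 * transpose_mat H2)"
      using H1c H2c A by (simp add: B_def assoc_mult_mat[of _ ?n ?n _ ?n _ ?n])
    thus ?thesis using orthm_QT[OF H1(1)] orthm_QT[OF H2(1)] A by simp
  qed
  moreover have "P * S * transpose_mat Q = H1 * (ext1 1 P' * ext1 \<sigma> S' * transpose_mat (ext1 1 Q')) * transpose_mat H2"
    using H1c H2c X by (simp add: P_def S_def Q_def transpose_mult[of _ ?n ?n _ ?n] assoc_mult_mat[of _ ?n ?n _ ?n _ ?n])
  ultimately have AP: "A = P * S * transpose_mat Q" by simp
  have "orthm ?n P" using orthm_mult[OF H1(1) ext1_orthm[OF IH(1)]] by (simp add: P_def)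
  moreover have "orthm ?n Q" using orthm_mult[OF H2(1) ext1_orthm[OF IH(2)]] by (simp add: Q_def)
  moreover have "S \<in> carrier_mat ?n ?n" using X by (simp add: S_def)
  moreover have "diagonal_mat S" using ext1_diag[OF IH(4)] by (simp add: S_def)
  moreover have "\<forall>i<?n. S $$ (i,i) \<ge> 0"
  proof (intro allI impI)
    fix i assume i: "i < ?n"
    show "S $$ (i,i) \<ge> 0" using i sv(1) IH(5) IH(3)
      by (cases i) (auto simp: S_def ext1_def)
  qed
  ultimately show ?case using AP by blast
qed


lemma diag_formula:
  assumes P: "P \<in> carrier_mat n k" and S: "S \<in> carrier_mat k k" and dS: "diagonal_mat S"
    and Q: "Q \<in> carrier_mat n k" and Z: "Z \<in> carrier_mat n n"
  shows "frob_inner Z (P * S * transpose_mat Q) = (\<Sum>i<k. S $$ (i,i) * (col P i \<bullet> (Z *\<^sub>v col Q i)))"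
proof -
  have ent: "\<And>a b. a < n \<Longrightarrow> b < n \<Longrightarrow> (P * S * transpose_mat Q) $$ (a,b) = (\<Sum>c<k. P $$ (a,c) * S $$ (c,c) * Q $$ (b,c))"
  proof -
    fix a b assume ab: "a < n" "b < n"
    have PS: "P * S \<in> carrier_mat n k" using P S by simp
    have "(P * S * transpose_mat Q) $$ (a,b) = (\<Sum>c<k. (P * S) $$ (a,c) * transpose_mat Q $$ (c,b))"
      using ab Q by (subst mult_entry[OF PS, of _ n]) auto
    also have "\<dots> = (\<Sum>c<k. (\<Sum>d<k. P $$ (a,d) * S $$ (d,c)) * Q $$ (b,c))"
      using ab Q P S by (intro sum.cong refl) (simp add: mult_entry[OF P S] del: index_mult_mat)
    also have "\<dots> = (\<Sum>c<k. P $$ (a,c) * S $$ (c,c) * Q $$ (b,c))"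
    proof (intro sum.cong refl)
      fix c assume c: "c \<in> {..<k}"
      have "(\<Sum>d<k. P $$ (a,d) * S $$ (d,c)) = (\<Sum>d<k. if d = c then P $$ (a,c) * S $$ (c,c) else 0)"
        using dS S c by (intro sum.cong refl) (auto simp: diagonal_mat_def)
      thus "(\<Sum>d<k. P $$ (a,d) * S $$ (d,c)) * Q $$ (b,c) = P $$ (a,c) * S $$ (c,c) * Q $$ (b,c)"
        using c by simp
    qed
    finally show "(P * S * transpose_mat Q) $$ (a,b) = (\<Sum>c<k. P $$ (a,c) * S $$ (c,c) * Q $$ (b,c))" .
  qed
  have "frob_inner Z (P * S * transpose_mat Q) = (\<Sum>a<n. \<Sum>b<n. Z $$ (a,b) * (\<Sum>c<k. P $$ (a,c) * S $$ (c,c) * Q $$ (b,c)))"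
    using Z ent by (simp add: fi_def'[OF Z])
  also have "\<dots> = (\<Sum>a<n. \<Sum>b<n. \<Sum>c<k. Z $$ (a,b) * P $$ (a,c) * S $$ (c,c) * Q $$ (b,c))"
    by (simp add: sum_distrib_left mult.assoc)
  also have "\<dots> = (\<Sum>c<k. \<Sum>a<n. \<Sum>b<n. Z $$ (a,b) * P $$ (a,c) * S $$ (c,c) * Q $$ (b,c))"
    by (subst (2) sum.swap, subst sum.swap, simp)
  also have "\<dots> = (\<Sum>c<k. S $$ (c,c) * (\<Sum>a<n. P $$ (a,c) * (\<Sum>b<n. Z $$ (a,b) * Q $$ (b,c))))"
    by (simp add: sum_distrib_left algebra_simps)
  also have "\<dots> = (\<Sum>i<k. S $$ (i,i) * (col P i \<bullet> (Z *\<^sub>v col Q i)))"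
  proof (intro sum.cong refl)
    fix c assume c: "c \<in> {..<k}"
    have cQ: "col Q c \<in> carrier_vec n" using Q unfolding carrier_vec_def by simp
    have "col P c \<bullet> (Z *\<^sub>v col Q c) = (\<Sum>a<n. col P c $ a * (Z *\<^sub>v col Q c) $ a)"
      using Z cQ by (intro sprod_def') simp
    also have "\<dots> = (\<Sum>a<n. P $$ (a,c) * (\<Sum>b<n. Z $$ (a,b) * Q $$ (b,c)))"
      using P Q Z c by (intro sum.cong refl) (simp add: mult_vec_entry[OF Z cQ] del: index_mult_mat_vec)
    finally show "S $$ (c,c) * (\<Sum>a<n. P $$ (a,c) * (\<Sum>b<n. Z $$ (a,b) * Q $$ (b,c))) = S $$ (c,c) * (col P c \<bullet> (Z *\<^sub>v col Q c))"
      by simp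
  qed
  finally show ?thesis .
qed

lemma col_unit:
  assumes U: "(U :: real mat) \<in> carrier_mat n r" and UU: "transpose_mat U * U = 1\<^sub>m r" and i: "i < r"
  shows "col U i \<bullet> col U i = 1" "vec_norm2 (col U i) = 1" "col U i \<in> carrier_vec n"
proof -
  have "(transpose_mat U * U) $$ (i,i) = col U i \<bullet> col U i" using U i by simp
  thus 1: "col U i \<bullet> col U i = 1" using UU i by simp
  thus "vec_norm2 (col U i) = 1" by (simp add: vec_norm2_def)
  show "col U i \<in> carrier_vec n" using U unfolding carrier_vec_def by simp
qed

lemma transp_col:
  assumes V: "(V :: real mat) \<in> carrier_mat n r" and VV: "transpose_mat V * V = 1\<^sub>m r" and i: "i < r"
  shows "transpose_mat V *\<^sub>v col V i = unit_vec r i"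
proof (rule eq_vecI)
  fix l assume l: "l < dim_vec (unit_vec r i)"
  hence l: "l < r" by simp
  have "(transpose_mat V *\<^sub>v col V i) $ l = (transpose_mat V * V) $$ (l,i)" using V l i by simp
  thus "(transpose_mat V *\<^sub>v col V i) $ l = unit_vec r i $ l" using VV l i by simp
qed (use V in auto)

lemma col_UVT:
  assumes U: "(U :: real mat) \<in> carrier_mat n r" and UU: "transpose_mat U * U = 1\<^sub>m r"
    and V: "V \<in> carrier_mat n r" and VV: "transpose_mat V * V = 1\<^sub>m r" and i: "i < r"
  shows "col U i \<bullet> ((U * transpose_mat V) *\<^sub>v col V i) = 1"
proof -
  have "(U * transpose_mat V) *\<^sub>v col V i = U *\<^sub>v (transpose_mat V *\<^sub>v col V i)"
    using U V assoc_mult_mat_vec[of U n r "transpose_mat V" n "col V i"] unfolding carrier_vec_def by simp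
  also have "\<dots> = col U i" using transp_col[OF V VV i] mult_unit_vec[OF U i] by simp
  finally show ?thesis using col_unit[OF U UU i] by simp
qed

definition svd_of :: "nat \<Rightarrow> real mat \<Rightarrow> real mat \<Rightarrow> real mat \<Rightarrow> real mat \<Rightarrow> bool" where
  "svd_of n A P S Q \<longleftrightarrow> orthm n P \<and> orthm n Q \<and> S \<in> carrier_mat n n \<and> diagonal_mat S
     \<and> (\<forall>i<n. S $$ (i,i) \<ge> 0) \<and> A = P * S * transpose_mat Q"

lemma orthm_norm:
  assumes Q: "orthm n Q" and x: "x \<in> carrier_vec n"
  shows "vec_norm2 (Q *\<^sub>v x) = vec_norm2 x"
proof -
  have Qc: "Q \<in> carrier_mat n n" using Q by (simp add: orthm_def)
  have "(Q *\<^sub>v x) \<bullet> (Q *\<^sub>v x) = (transpose_mat Q *\<^sub>v (Q *\<^sub>v x)) \<bullet> x"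
    using transpose_vec_mult_scalar[OF Qc x, of "Q *\<^sub>v x"] Qc x by simp
  also have "transpose_mat Q *\<^sub>v (Q *\<^sub>v x) = x"
    using Qc x orthm_TQ[OF Q] by (simp flip: assoc_mult_mat_vec)
  finally show ?thesis by (simp add: vec_norm2_def)
qed

lemma spec_PQT:
  assumes P: "orthm n P" and Q: "orthm n Q"
  shows "spec_norm (P * transpose_mat Q) \<le> 1"
proof -
  have Pc: "P \<in> carrier_mat n n" and Qc: "Q \<in> carrier_mat n n" using P Q by (auto simp: orthm_def)
  show ?thesis
  proof (rule spec_le[of _ n n])
    show "P * transpose_mat Q \<in> carrier_mat n n" using Pc Qc by simp
    fix x :: "real vec" assume x: "x \<in> carrier_vec n" "vec_norm2 x \<le> 1"
    have "(P * transpose_mat Q) *\<^sub>v x = P *\<^sub>v (transpose_mat Q *\<^sub>v x)"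
      using Pc Qc x by (simp add: assoc_mult_mat_vec[of _ n n _ n])
    hence "vec_norm2 ((P * transpose_mat Q) *\<^sub>v x) = vec_norm2 x"
      using orthm_norm[OF P, of "transpose_mat Q *\<^sub>v x"] orthm_norm[OF orthm_transpose[OF Q] x(1)] Qc x by simp
    thus "vec_norm2 ((P * transpose_mat Q) *\<^sub>v x) \<le> 1" using x by simp
  qed
qed

lemma svd_dual:
  assumes svd: "svd_of n A P S Q" and Z: "Z \<in> carrier_mat n n"
  shows "\<bar>frob_inner Z A\<bar> \<le> spec_norm Z * (\<Sum>i<n. S $$ (i,i))"
proof -
  have Pc: "P \<in> carrier_mat n n" and Qc: "Q \<in> carrier_mat n n" and S: "S \<in> carrier_mat n n"
    and dS: "diagonal_mat S" and Sp: "\<forall>i<n. S $$ (i,i) \<ge> 0" and A: "A = P * S * transpose_mat Q"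
    using svd by (auto simp: svd_of_def orthm_def)
  have "\<bar>frob_inner Z A\<bar> = \<bar>\<Sum>i<n. S $$ (i,i) * (col P i \<bullet> (Z *\<^sub>v col Q i))\<bar>"
    using diag_formula[OF Pc S dS Qc Z] A by simp
  also have "\<dots> \<le> (\<Sum>i<n. \<bar>S $$ (i,i) * (col P i \<bullet> (Z *\<^sub>v col Q i))\<bar>)" by (rule sum_abs)
  also have "\<dots> \<le> (\<Sum>i<n. S $$ (i,i) * spec_norm Z)"
  proof (intro sum_mono)
    fix i assume i: "i \<in> {..<n}"
    have "\<bar>col P i \<bullet> (Z *\<^sub>v col Q i)\<bar> \<le> spec_norm Z"
      using spec_bilin[OF Z] col_unit[OF Pc orthm_TQ, of i] col_unit[OF Qc orthm_TQ, of i] svd i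
      by (auto simp: svd_of_def)
    thus "\<bar>S $$ (i,i) * (col P i \<bullet> (Z *\<^sub>v col Q i))\<bar> \<le> S $$ (i,i) * spec_norm Z"
      using Sp i by (simp add: abs_mult mult_left_mono)
  qed
  also have "\<dots> = spec_norm Z * (\<Sum>i<n. S $$ (i,i))" by (simp add: sum_distrib_left mult.commute)
  finally show ?thesis .
qed

lemma svd_PQT:
  assumes svd: "svd_of n A P S Q"
  shows "frob_inner (P * transpose_mat Q) A = (\<Sum>i<n. S $$ (i,i))"
proof -
  have Pc: "P \<in> carrier_mat n n" and Qc: "Q \<in> carrier_mat n n" and S: "S \<in> carrier_mat n n"
    and dS: "diagonal_mat S" and A: "A = P * S * transpose_mat Q"
    and PP: "transpose_mat P * P = 1\<^sub>m n" and QQ: "transpose_mat Q * Q = 1\<^sub>m n"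
    using svd by (auto simp: svd_of_def orthm_def)
  have "frob_inner (P * transpose_mat Q) A = (\<Sum>i<n. S $$ (i,i) * (col P i \<bullet> ((P * transpose_mat Q) *\<^sub>v col Q i)))"
    using diag_formula[OF Pc S dS Qc, of "P * transpose_mat Q"] A Pc Qc by simp
  also have "\<dots> = (\<Sum>i<n. S $$ (i,i))"
    using col_UVT[OF Pc PP Qc QQ] by simp
  finally show ?thesis .
qed

lemma nuc_eq:
  assumes svd: "svd_of n A P S Q"
  shows "nuc_norm A = (\<Sum>i<n. S $$ (i,i))"
proof -
  have Ac: "A \<in> carrier_mat n n" using svd by (auto simp: svd_of_def orthm_def)
  have le: "\<And>P1 S1 Q1 P2 S2 Q2. svd_of n A P1 S1 Q1 \<Longrightarrow> svd_of n A P2 S2 Q2 \<Longrightarrow>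
      (\<Sum>i<n. S1 $$ (i,i)) \<le> (\<Sum>i<n. S2 $$ (i,i))"
  proof -
    fix P1 S1 Q1 P2 S2 Q2 assume s1: "svd_of n A P1 S1 Q1" and s2: "svd_of n A P2 S2 Q2"
    have o: "orthm n P1" "orthm n Q1" using s1 by (auto simp: svd_of_def)
    have Zc: "P1 * transpose_mat Q1 \<in> carrier_mat n n" using o by (auto simp: orthm_def)
    have nn: "(\<Sum>i<n. S2 $$ (i,i)) \<ge> 0" using s2 by (auto simp: svd_of_def intro!: sum_nonneg)
    have "(\<Sum>i<n. S1 $$ (i,i)) = frob_inner (P1 * transpose_mat Q1) A" using svd_PQT[OF s1] by simp
    also have "\<dots> \<le> spec_norm (P1 * transpose_mat Q1) * (\<Sum>i<n. S2 $$ (i,i))"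
      using svd_dual[OF s2 Zc] by simp
    also have "\<dots> \<le> 1 * (\<Sum>i<n. S2 $$ (i,i))"
      using spec_PQT[OF o] nn by (intro mult_right_mono) auto
    finally show "(\<Sum>i<n. S1 $$ (i,i)) \<le> (\<Sum>i<n. S2 $$ (i,i))" by simp
  qed
  have "nuc_norm A = (THE s. \<exists>P S Q. svd_of n A P S Q \<and> s = (\<Sum>i<n. S $$ (i,i)))"
    unfolding nuc_norm_def svd_of_def orthm_def using Ac by (simp add: conj_ac)
  also have "\<dots> = (\<Sum>i<n. S $$ (i,i))"
  proof (rule the_equality)
    show "\<exists>P' S' Q'. svd_of n A P' S' Q' \<and> (\<Sum>i<n. S $$ (i,i)) = (\<Sum>i<n. S' $$ (i,i))"
      using svd by blast
    fix s assume "\<exists>P' S' Q'. svd_of n A P' S' Q' \<and> s = (\<Sum>i<n. S' $$ (i,i))"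
    then obtain P' S' Q' where "svd_of n A P' S' Q'" "s = (\<Sum>i<n. S' $$ (i,i))" by blast
    thus "s = (\<Sum>i<n. S $$ (i,i))" using le[OF svd] le[of P' S' Q' P S Q] svd by force
  qed
  finally show ?thesis .
qed

lemma svd_of_exists:
  assumes "A \<in> carrier_mat n n" shows "\<exists>P S Q. svd_of n A P S Q"
  using svd_exists[OF assms] by (auto simp: svd_of_def)

lemma nuc_dual:
  assumes A: "A \<in> carrier_mat n n" and Z: "Z \<in> carrier_mat n n"
  shows "\<bar>frob_inner Z A\<bar> \<le> spec_norm Z * nuc_norm A"
proof -
  obtain P S Q where s: "svd_of n A P S Q" using svd_of_exists[OF A] by blast
  show ?thesis using svd_dual[OF s Z] nuc_eq[OF s] by simp
qed

lemma nuc_nonneg: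
  assumes A: "A \<in> carrier_mat n n" shows "nuc_norm A \<ge> 0"
proof -
  obtain P S Q where s: "svd_of n A P S Q" using svd_of_exists[OF A] by blast
  show ?thesis using nuc_eq[OF s] s by (auto simp: svd_of_def intro!: sum_nonneg)
qed

lemma nuc_ge_frob:
  assumes A: "A \<in> carrier_mat n n" shows "frob_norm A \<le> nuc_norm A"
proof (cases "frob_norm A = 0")
  case True thus ?thesis using nuc_nonneg[OF A] by simp
next
  case False
  hence fp: "frob_norm A > 0" using frob_norm_nonneg[of A] by simp
  define Z where "Z = (1 / frob_norm A) \<cdot>\<^sub>m A"
  have Z: "Z \<in> carrier_mat n n" using A by (simp add: Z_def)
  have "spec_norm Z \<le> frob_norm Z" by (rule spec_le_frob[OF Z])
  also have "\<dots> = 1" using frob_smult[OF A] fp by (simp add: Z_def)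
  finally have sZ: "spec_norm Z \<le> 1" .
  have "frob_inner Z A = frob_norm A"
    using A fp by (simp add: Z_def fi_smult_left frob_norm_sq[symmetric] power2_eq_square)
  hence "frob_norm A \<le> spec_norm Z * nuc_norm A" using nuc_dual[OF A Z] by simp
  also have "\<dots> \<le> 1 * nuc_norm A" using sZ nuc_nonneg[OF A] by (intro mult_right_mono) auto
  finally show ?thesis by simp
qed


definition cproj :: "nat \<Rightarrow> real mat \<Rightarrow> real mat" where
  "cproj n U = 1\<^sub>m n - U * transpose_mat U"

lemma cproj_carrier: "U \<in> carrier_mat n r \<Longrightarrow> cproj n U \<in> carrier_mat n n"
  unfolding cproj_def by (rule minus_carrier_mat) auto

lemma minus_zero_mat': "A \<in> carrier_mat nr nc \<Longrightarrow> A - 0\<^sub>m nr nc = (A :: real mat)"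
  by (intro eq_matI) auto

lemma cpc: "U \<in> carrier_mat n r \<Longrightarrow> V \<in> carrier_mat n r \<Longrightarrow> M \<in> carrier_mat n n \<Longrightarrow>
  cproj n U * M * cproj n V \<in> carrier_mat n n"
  using cproj_carrier[of U n r] cproj_carrier[of V n r] by (metis mult_carrier_mat)

lemma cproj_sym:
  assumes U: "U \<in> carrier_mat n r"
  shows "transpose_mat (cproj n U) = cproj n U"
proof -
  have "transpose_mat (U * transpose_mat U) = U * transpose_mat U"
    using U by (simp add: transpose_mult[of _ n r _ n])
  thus ?thesis using U by (simp add: cproj_def transpose_minus[of _ n n])
qed

lemma UT_cproj:
  assumes U: "U \<in> carrier_mat n r" and UU: "transpose_mat U * U = 1\<^sub>m r"
  shows "transpose_mat U * cproj n U = 0\<^sub>m r n"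
proof -
  have "transpose_mat U * cproj n U = transpose_mat U * 1\<^sub>m n - transpose_mat U * (U * transpose_mat U)"
    unfolding cproj_def using U by (intro mult_minus_distrib_mat[of _ r n]) auto
  also have "transpose_mat U * (U * transpose_mat U) = (transpose_mat U * U) * transpose_mat U"
    using U by (simp add: assoc_mult_mat[of _ r n _ r _ n])
  also have "\<dots> = transpose_mat U" using UU U by simp
  finally show ?thesis using U by simp
qed

lemma cproj_U:
  assumes U: "U \<in> carrier_mat n r" and UU: "transpose_mat U * U = 1\<^sub>m r"
  shows "cproj n U * U = 0\<^sub>m n r"
proof -
  have "cproj n U * U = 1\<^sub>m n * U - (U * transpose_mat U) * U"
    unfolding cproj_def using U by (intro minus_mult_distrib_mat[of _ n n]) auto
  also have "(U * transpose_mat U) * U = U * (transpose_mat U * U)"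
    using U by (simp add: assoc_mult_mat[of _ n r _ n _ r])
  also have "\<dots> = U" using UU U by simp
  finally show ?thesis using U by simp
qed

lemma cproj_idem:
  assumes U: "U \<in> carrier_mat n r" and UU: "transpose_mat U * U = 1\<^sub>m r"
  shows "cproj n U * cproj n U = cproj n U"
proof -
  have C: "cproj n U \<in> carrier_mat n n" using cproj_carrier[OF U] .
  have "cproj n U * cproj n U = cproj n U * 1\<^sub>m n - cproj n U * (U * transpose_mat U)"
    using U C by (subst (2) cproj_def, intro mult_minus_distrib_mat[of _ n n]) auto
  also have "cproj n U * (U * transpose_mat U) = (cproj n U * U) * transpose_mat U"
    using U C by (simp add: assoc_mult_mat[of _ n n _ r _ n])
  also have "\<dots> = 0\<^sub>m n n" using cproj_U[OF U UU] U by simp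
  finally show ?thesis using C by (simp add: minus_zero_mat')
qed

definition ptf :: "nat \<Rightarrow> real mat \<Rightarrow> real mat \<Rightarrow> real mat \<Rightarrow> real mat" where
  "ptf n U V M = M - cproj n U * M * cproj n V"

lemma T_carrier:
  assumes U: "U \<in> carrier_mat n r" and V: "V \<in> carrier_mat n r" and Y: "Y \<in> tangent_space n r U V"
  shows "Y \<in> carrier_mat n n"
  using assms by (auto simp: tangent_space_def)

lemma ptf_in_T:
  assumes U: "U \<in> carrier_mat n r" and V: "V \<in> carrier_mat n r" and M: "M \<in> carrier_mat n n"
  shows "ptf n U V M \<in> tangent_space n r U V"
proof -
  define P where "P = U * transpose_mat U"
  define Q where "Q = V * transpose_mat V"
  have P: "P \<in> carrier_mat n n" and Q: "Q \<in> carrier_mat n n" using U V by (auto simp: P_def Q_def)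
  have e1: "cproj n U * M = M - P * M"
    unfolding cproj_def P_def[symmetric] using P M by (subst minus_mult_distrib_mat[of _ n n]) auto
  have e2: "(M - P * M) * cproj n V = (M - P * M) - (M * Q - P * M * Q)"
  proof -
    have "(M - P * M) * cproj n V = (M - P * M) * 1\<^sub>m n - (M - P * M) * Q"
      unfolding cproj_def Q_def[symmetric] using P M Q by (intro mult_minus_distrib_mat[of _ n n]) auto
    also have "(M - P * M) * Q = M * Q - P * M * Q"
      using P M Q by (intro minus_mult_distrib_mat[of _ n n]) auto
    finally show ?thesis using P M by simp
  qed
  define X where "X = transpose_mat M * U"
  define Y where "Y = M * V - U * (transpose_mat U * (M * V))"
  have X: "X \<in> carrier_mat n r" and Y: "Y \<in> carrier_mat n r" using U V M by (auto simp: X_def Y_def)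
  have e3: "U * transpose_mat X = P * M"
    using U M by (simp add: X_def P_def transpose_mult[of _ n n _ r] assoc_mult_mat[of _ n r _ n _ n])
  have e4: "Y * transpose_mat V = M * Q - P * M * Q"
  proof -
    have "Y * transpose_mat V = M * V * transpose_mat V - U * (transpose_mat U * (M * V)) * transpose_mat V"
      unfolding Y_def using U V M by (intro minus_mult_distrib_mat[of _ n r]) auto
    also have "M * V * transpose_mat V = M * Q"
      using M V by (simp add: Q_def assoc_mult_mat[of _ n n _ r _ n])
    also have "U * (transpose_mat U * (M * V)) * transpose_mat V = P * M * Q"
    proof -
      have a1: "U * (transpose_mat U * (M * V)) * transpose_mat V = U * ((transpose_mat U * (M * V)) * transpose_mat V)"
        by (rule assoc_mult_mat[of _ n r _ r _ n]) (use U V M in \<open>auto intro!: mult_carrier_mat\<close>)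
      have a2: "(transpose_mat U * (M * V)) * transpose_mat V = transpose_mat U * ((M * V) * transpose_mat V)"
        by (rule assoc_mult_mat[of _ r n _ r _ n]) (use U V M in \<open>auto intro!: mult_carrier_mat\<close>)
      have a3: "(M * V) * transpose_mat V = M * Q"
        unfolding Q_def by (rule assoc_mult_mat[of _ n n _ r _ n]) (use U V M in \<open>auto intro!: mult_carrier_mat\<close>)
      have b1: "P * M = U * (transpose_mat U * M)"
        unfolding P_def by (rule assoc_mult_mat[of _ n r _ n _ n]) (use U V M in \<open>auto intro!: mult_carrier_mat\<close>)
      have b2: "U * (transpose_mat U * M) * Q = U * ((transpose_mat U * M) * Q)"
        by (rule assoc_mult_mat[of _ n r _ n _ n]) (use U V M Q in \<open>auto intro!: mult_carrier_mat\<close>)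
      have b3: "(transpose_mat U * M) * Q = transpose_mat U * (M * Q)"
        by (rule assoc_mult_mat[of _ r n _ n _ n]) (use U V M Q in \<open>auto intro!: mult_carrier_mat\<close>)
      show ?thesis unfolding a1 a2 a3 b1 b2 b3 ..
    qed
    finally show ?thesis .
  qed
  have "ptf n U V M = U * transpose_mat X + Y * transpose_mat V"
    unfolding e3 e4 ptf_def e1 e2 using P M Q by (intro eq_matI) auto
  thus ?thesis using X Y by (auto simp: tangent_space_def)
qed

lemma ptf_compl:
  assumes U: "U \<in> carrier_mat n r" and V: "V \<in> carrier_mat n r" and M: "M \<in> carrier_mat n n"
  shows "M - ptf n U V M = cproj n U * M * cproj n V"
  using U V M by (intro eq_matI) (auto simp: ptf_def cproj_def)

lemma compl_orth:
  assumes U: "U \<in> carrier_mat n r" and UU: "transpose_mat U * U = 1\<^sub>m r"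
    and V: "V \<in> carrier_mat n r" and VV: "transpose_mat V * V = 1\<^sub>m r"
    and M: "M \<in> carrier_mat n n" and Y: "Y \<in> tangent_space n r U V"
  shows "frob_inner (cproj n U * M * cproj n V) Y = 0"
proof -
  obtain X1 Y1 where XY: "X1 \<in> carrier_mat n r" "Y1 \<in> carrier_mat n r" "Y = U * transpose_mat X1 + Y1 * transpose_mat V"
    using Y by (auto simp: tangent_space_def)
  define C where "C = cproj n U * M * cproj n V"
  have C: "C \<in> carrier_mat n n" using cpc[OF U V M] by (simp add: C_def)
  have a: "frob_inner C (U * transpose_mat X1) = 0"
  proof -
    have "frob_inner C (U * transpose_mat X1) = frob_inner (U * transpose_mat X1) C"
      using C U XY by (intro fi_comm) auto
    also have "\<dots> = frob_inner (transpose_mat X1) (transpose_mat U * C)"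
      using C U XY by (intro fi_mult_left) auto
    also have "transpose_mat U * C = (transpose_mat U * cproj n U) * M * cproj n V"
    proof -
      have c1: "cproj n U \<in> carrier_mat n n" "cproj n V \<in> carrier_mat n n" using cproj_carrier U V by auto
      have "transpose_mat U * C = transpose_mat U * (cproj n U * (M * cproj n V))"
        unfolding C_def using c1 M by (subst assoc_mult_mat[of _ n n _ n _ n]) auto
      also have "\<dots> = (transpose_mat U * cproj n U) * (M * cproj n V)"
        by (rule assoc_mult_mat[of _ r n _ n _ n, symmetric]) (use U c1 M in \<open>auto intro!: mult_carrier_mat\<close>)
      also have "\<dots> = (transpose_mat U * cproj n U) * M * cproj n V"
        by (rule assoc_mult_mat[of _ r n _ n _ n, symmetric]) (use U c1 M in \<open>auto intro!: mult_carrier_mat\<close>)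
      finally show ?thesis .
    qed
    also have "\<dots> = 0\<^sub>m r n" using UT_cproj[OF U UU] M V cproj_carrier[OF V] by simp
    finally show ?thesis using XY by (simp add: fi_zero_right[of _ r n])
  qed
  have b: "frob_inner C (Y1 * transpose_mat V) = 0"
  proof -
    have "frob_inner C (Y1 * transpose_mat V) = frob_inner (Y1 * transpose_mat V) C"
      using C V XY by (intro fi_comm) auto
    also have "\<dots> = frob_inner Y1 (C * V)"
      using C V XY fi_mult_right[of Y1 n r "transpose_mat V" n C] by simp
    also have "C * V = cproj n U * M * (cproj n V * V)"
      unfolding C_def
      by (rule assoc_mult_mat[of _ n n _ n _ r]) (use U V M cproj_carrier[OF U] cproj_carrier[OF V] in \<open>auto intro!: mult_carrier_mat\<close>)
    also have "\<dots> = 0\<^sub>m n r" using cproj_U[OF V VV] M U cproj_carrier[OF U] by simp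
    finally show ?thesis using XY by (simp add: fi_zero_right[of _ n r])
  qed
  show ?thesis using a b XY C U V by (simp add: C_def[symmetric] fi_add_right[of _ n n])
qed

lemma T_diff:
  assumes U: "U \<in> carrier_mat n r" and V: "V \<in> carrier_mat n r"
    and A: "A \<in> tangent_space n r U V" and B: "B \<in> tangent_space n r U V"
  shows "A - B \<in> tangent_space n r U V"
proof -
  obtain X1 Y1 where 1: "X1 \<in> carrier_mat n r" "Y1 \<in> carrier_mat n r" "A = U * transpose_mat X1 + Y1 * transpose_mat V"
    using A by (auto simp: tangent_space_def)
  obtain X2 Y2 where 2: "X2 \<in> carrier_mat n r" "Y2 \<in> carrier_mat n r" "B = U * transpose_mat X2 + Y2 * transpose_mat V"
    using B by (auto simp: tangent_space_def)
  have "U * transpose_mat (X1 - X2) = U * transpose_mat X1 - U * transpose_mat X2"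
    using U 1 2 by (simp add: transpose_minus[of _ n r] mult_minus_distrib_mat[of _ n r])
  moreover have "(Y1 - Y2) * transpose_mat V = Y1 * transpose_mat V - Y2 * transpose_mat V"
    using V 1 2 by (simp add: minus_mult_distrib_mat[of _ n r])
  ultimately have "A - B = U * transpose_mat (X1 - X2) + (Y1 - Y2) * transpose_mat V"
    using U V 1 2 by (intro eq_matI) auto
  moreover have "X1 - X2 \<in> carrier_mat n r" "Y1 - Y2 \<in> carrier_mat n r"
    using 1 2 by (auto intro: minus_carrier_mat)
  ultimately show ?thesis unfolding tangent_space_def by blast
qed

lemma orth_proj_eq:
  assumes U: "U \<in> carrier_mat n r" and UU: "transpose_mat U * U = 1\<^sub>m r"
    and V: "V \<in> carrier_mat n r" and VV: "transpose_mat V * V = 1\<^sub>m r"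
    and M: "M \<in> carrier_mat n n"
  shows "orth_proj n (tangent_space n r U V) M = ptf n U V M"
  unfolding orth_proj_def
proof (rule the_equality)
  show "ptf n U V M \<in> tangent_space n r U V \<and> (\<forall>Y\<in>tangent_space n r U V. frob_inner (M - ptf n U V M) Y = 0)"
    using ptf_in_T[OF U V M] compl_orth[OF U UU V VV M] ptf_compl[OF U V M] by simp
  fix X assume X: "X \<in> tangent_space n r U V \<and> (\<forall>Y\<in>tangent_space n r U V. frob_inner (M - X) Y = 0)"
  define D where "D = ptf n U V M - X"
  have DT: "D \<in> tangent_space n r U V" using T_diff[OF U V ptf_in_T[OF U V M]] X by (simp add: D_def)
  have Xc: "X \<in> carrier_mat n n" using T_carrier[OF U V] X by blast
  have Pc: "ptf n U V M \<in> carrier_mat n n" using T_carrier[OF U V ptf_in_T[OF U V M]] .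
  have Deq: "D = (M - X) - (M - ptf n U V M)" using Xc Pc M by (intro eq_matI) (auto simp: D_def)
  have "frob_inner D D = frob_inner ((M - X) - (M - ptf n U V M)) D"
    by (subst (1) Deq) (rule refl)
  also have "\<dots> = frob_inner (M - X) D - frob_inner (M - ptf n U V M) D"
    by (rule fi_minus_left) (use Xc Pc M in \<open>auto intro: minus_carrier_mat\<close>)
  also have "\<dots> = 0"
    using X DT compl_orth[OF U UU V VV M DT] ptf_compl[OF U V M] by simp
  moreover have "D \<in> carrier_mat n n" using Xc unfolding D_def by (rule minus_carrier_mat)
  ultimately have "D = 0\<^sub>m n n" using fi_self_zero[of D n n] by simp
  hence z: "\<And>i j. i < n \<Longrightarrow> j < n \<Longrightarrow> (ptf n U V M - X) $$ (i,j) = 0" by (simp add: D_def)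
  show "X = ptf n U V M"
  proof (rule eq_matI)
    fix i j assume ij: "i < dim_row (ptf n U V M)" "j < dim_col (ptf n U V M)"
    thus "X $$ (i,j) = ptf n U V M $$ (i,j)" using z[of i j] Xc Pc by auto
  qed (use Xc Pc in auto)
qed


lemma sprod_add_self:
  assumes a: "(a :: real vec) \<in> carrier_vec n" and b: "b \<in> carrier_vec n"
  shows "(a + b) \<bullet> (a + b) = a \<bullet> a + 2 * (a \<bullet> b) + b \<bullet> b"
proof -
  have ab: "a + b \<in> carrier_vec n" using a b by simp
  show ?thesis using a b
    by (simp add: sprod_def'[OF ab] sprod_def'[OF a] sprod_def'[OF b] algebra_simps sum.distrib sum_distrib_left power2_eq_square)
qed

lemma sprod_minus_self:
  assumes a: "(a :: real vec) \<in> carrier_vec n" and b: "b \<in> carrier_vec n"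
  shows "(a - b) \<bullet> (a - b) = a \<bullet> a - 2 * (a \<bullet> b) + b \<bullet> b"
proof -
  have ab: "a - b \<in> carrier_vec n" using a b by simp
  have "(\<Sum>l<n. (a $ l - b $ l) * (a $ l - b $ l)) = (\<Sum>l<n. a $ l * a $ l) - 2 * (\<Sum>l<n. a $ l * b $ l) + (\<Sum>l<n. b $ l * b $ l)"
    by (simp add: algebra_simps sum.distrib sum_subtractf sum_distrib_left)
  thus ?thesis using a b ab by (simp add: sprod_def'[OF ab] sprod_def'[OF a] sprod_def'[OF b])
qed

lemma sprod_minus_left:
  assumes a: "(a :: real vec) \<in> carrier_vec n" and b: "b \<in> carrier_vec n" and c: "c \<in> carrier_vec n"
  shows "(a - b) \<bullet> c = a \<bullet> c - b \<bullet> c"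
  using a b c by (simp add: sprod_def'[OF c] algebra_simps sum_subtractf)

lemma Ut_move:
  assumes U: "(U :: real mat) \<in> carrier_mat n r" and y: "y \<in> carrier_vec r" and z: "z \<in> carrier_vec n"
  shows "(U *\<^sub>v y) \<bullet> z = y \<bullet> (transpose_mat U *\<^sub>v z)"
  using transpose_vec_mult_scalar[of "transpose_mat U" r n z y] U y z by simp

lemma cproj_vec:
  assumes U: "(U :: real mat) \<in> carrier_mat n r" and z: "z \<in> carrier_vec n"
  shows "cproj n U *\<^sub>v z = z - U *\<^sub>v (transpose_mat U *\<^sub>v z)"
proof -
  have "cproj n U *\<^sub>v z = 1\<^sub>m n *\<^sub>v z - (U * transpose_mat U) *\<^sub>v z"
    unfolding cproj_def using U z by (intro minus_mult_distrib_mat_vec) auto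
  thus ?thesis using U z by (simp add: assoc_mult_mat_vec[of _ n r _ n])
qed

lemma zero_mult_vec: "z \<in> carrier_vec n \<Longrightarrow> (0\<^sub>m r n :: real mat) *\<^sub>v z = 0\<^sub>v r"
  by (intro eq_vecI) (auto simp: scalar_prod_def)

lemma cproj_quad:
  assumes U: "(U :: real mat) \<in> carrier_mat n r" and UU: "transpose_mat U * U = 1\<^sub>m r" and z: "z \<in> carrier_vec n"
  shows "(cproj n U *\<^sub>v z) \<bullet> (cproj n U *\<^sub>v z) = z \<bullet> z - (transpose_mat U *\<^sub>v z) \<bullet> (transpose_mat U *\<^sub>v z)"
    and "(cproj n U *\<^sub>v z) \<bullet> (cproj n U *\<^sub>v z) \<le> z \<bullet> z"
proof -
  define w where "w = transpose_mat U *\<^sub>v z"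
  have w: "w \<in> carrier_vec r" using U z by (simp add: w_def)
  define p where "p = U *\<^sub>v w"
  have p: "p \<in> carrier_vec n" using U w by (simp add: p_def)
  have pz: "p \<bullet> z = w \<bullet> w" unfolding p_def using Ut_move[OF U w z] by (simp add: w_def)
  have "transpose_mat U *\<^sub>v p = w"
    unfolding p_def using U w UU by (simp flip: assoc_mult_mat_vec)
  hence pp: "p \<bullet> p = w \<bullet> w" using Ut_move[OF U w p] by (simp add: p_def)
  have zp: "z \<bullet> p = p \<bullet> z" using comm_scalar_prod[OF z p] .
  have "(cproj n U *\<^sub>v z) \<bullet> (cproj n U *\<^sub>v z) = (z - p) \<bullet> (z - p)"
    using cproj_vec[OF U z] by (simp add: p_def w_def)
  also have "\<dots> = z \<bullet> z - w \<bullet> w" using sprod_minus_self[OF z p] pz pp zp by simp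
  finally show 1: "(cproj n U *\<^sub>v z) \<bullet> (cproj n U *\<^sub>v z) = z \<bullet> z - (transpose_mat U *\<^sub>v z) \<bullet> (transpose_mat U *\<^sub>v z)"
    by (simp add: w_def)
  show "(cproj n U *\<^sub>v z) \<bullet> (cproj n U *\<^sub>v z) \<le> z \<bullet> z"
    using 1 sprod_self_nonneg[of "transpose_mat U *\<^sub>v z"] by simp
qed

lemma cross_zero:
  assumes U: "(U :: real mat) \<in> carrier_mat n r" and UU: "transpose_mat U * U = 1\<^sub>m r"
    and y: "y \<in> carrier_vec r" and z: "z \<in> carrier_vec n"
  shows "(U *\<^sub>v y) \<bullet> (cproj n U *\<^sub>v z) = 0"
proof -
  have Rz: "cproj n U *\<^sub>v z \<in> carrier_vec n" using cproj_carrier[OF U] z by simp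
  have "transpose_mat U *\<^sub>v (cproj n U *\<^sub>v z) = (transpose_mat U * cproj n U) *\<^sub>v z"
    using U z cproj_carrier[OF U] by (simp add: assoc_mult_mat_vec[of _ r n _ n])
  also have "\<dots> = 0\<^sub>v r" using UT_cproj[OF U UU] z zero_mult_vec by simp
  finally show ?thesis using Ut_move[OF U y Rz] y by simp
qed

lemma spec_Z:
  assumes U: "(U :: real mat) \<in> carrier_mat n r" and UU: "transpose_mat U * U = 1\<^sub>m r"
    and V: "V \<in> carrier_mat n r" and VV: "transpose_mat V * V = 1\<^sub>m r"
    and P: "orthm n P" and Q: "orthm n Q"
  shows "spec_norm (U * transpose_mat V + cproj n U * (P * transpose_mat Q) * cproj n V) \<le> 1"
proof -
  have Pc: "P \<in> carrier_mat n n" and Qc: "Q \<in> carrier_mat n n" using P Q by (auto simp: orthm_def)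
  have RU: "cproj n U \<in> carrier_mat n n" and RV: "cproj n V \<in> carrier_mat n n"
    using cproj_carrier U V by auto
  have PQ: "P * transpose_mat Q \<in> carrier_mat n n" using Pc Qc by simp
  have Zc: "U * transpose_mat V + cproj n U * (P * transpose_mat Q) * cproj n V \<in> carrier_mat n n"
    using U V RU RV PQ by (intro add_carrier_mat) (auto intro!: mult_carrier_mat)
  show ?thesis
  proof (rule spec_le[OF Zc])
    fix x :: "real vec" assume x: "x \<in> carrier_vec n" "vec_norm2 x \<le> 1"
    define y where "y = transpose_mat V *\<^sub>v x"
    define x' where "x' = cproj n V *\<^sub>v x"
    define z where "z = (P * transpose_mat Q) *\<^sub>v x'"
    have y: "y \<in> carrier_vec r" and x': "x' \<in> carrier_vec n" and z: "z \<in> carrier_vec n"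
      using V x RV PQ by (auto simp: y_def x'_def z_def)
    have Zx: "(U * transpose_mat V + cproj n U * (P * transpose_mat Q) * cproj n V) *\<^sub>v x
        = U *\<^sub>v y + cproj n U *\<^sub>v z"
    proof -
      have "(U * transpose_mat V + cproj n U * (P * transpose_mat Q) * cproj n V) *\<^sub>v x
          = (U * transpose_mat V) *\<^sub>v x + (cproj n U * (P * transpose_mat Q) * cproj n V) *\<^sub>v x"
        by (rule add_mult_distrib_mat_vec) (use U V RU RV PQ x Pc Qc in \<open>auto intro!: mult_carrier_mat\<close>)
      also have "(U * transpose_mat V) *\<^sub>v x = U *\<^sub>v y"
        unfolding y_def using U V x by (simp add: assoc_mult_mat_vec[of _ n r _ n])
      also have "(cproj n U * (P * transpose_mat Q) * cproj n V) *\<^sub>v x = cproj n U *\<^sub>v z"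
        unfolding z_def x'_def using RU RV PQ x
        by (simp add: assoc_mult_mat_vec[of _ n n _ n] del: assoc_mult_mat)
      finally show ?thesis .
    qed
    have Uy: "U *\<^sub>v y \<in> carrier_vec n" and Rz: "cproj n U *\<^sub>v z \<in> carrier_vec n" using U y RU z by auto
    have uu: "(U *\<^sub>v y) \<bullet> (U *\<^sub>v y) = y \<bullet> y"
    proof -
      have "transpose_mat U *\<^sub>v (U *\<^sub>v y) = y" using U y UU by (simp flip: assoc_mult_mat_vec)
      thus ?thesis using Ut_move[OF U y Uy] by simp
    qed
    have zz: "z \<bullet> z = x' \<bullet> x'"
      using orthm_norm[OF P, of "transpose_mat Q *\<^sub>v x'"] orthm_norm[OF orthm_transpose[OF Q] x'] Pc Qc x'
      unfolding z_def vec_norm2_def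
      by (simp add: assoc_mult_mat_vec[of _ n n _ n] sprod_self_nonneg)
    have xx: "x' \<bullet> x' = x \<bullet> x - y \<bullet> y"
      using cproj_quad(1)[OF V VV x(1)] by (simp add: x'_def y_def)
    have "(U *\<^sub>v y + cproj n U *\<^sub>v z) \<bullet> (U *\<^sub>v y + cproj n U *\<^sub>v z)
        = (U *\<^sub>v y) \<bullet> (U *\<^sub>v y) + 2 * ((U *\<^sub>v y) \<bullet> (cproj n U *\<^sub>v z)) + (cproj n U *\<^sub>v z) \<bullet> (cproj n U *\<^sub>v z)"
      by (rule sprod_add_self[OF Uy Rz])
    also have "\<dots> \<le> y \<bullet> y + 0 + z \<bullet> z"
      using uu cross_zero[OF U UU y z] cproj_quad(2)[OF U UU z] by simp
    also have "\<dots> = x \<bullet> x" using zz xx by simp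
    finally have "(U *\<^sub>v y + cproj n U *\<^sub>v z) \<bullet> (U *\<^sub>v y + cproj n U *\<^sub>v z) \<le> x \<bullet> x" .
    hence "vec_norm2 (U *\<^sub>v y + cproj n U *\<^sub>v z) \<le> vec_norm2 x"
      unfolding vec_norm2_def by (rule real_sqrt_le_mono)
    thus "vec_norm2 ((U * transpose_mat V + cproj n U * (P * transpose_mat Q) * cproj n V) *\<^sub>v x) \<le> 1"
      using Zx x by simp
  qed
qed


lemma fi_cproj_move:
  assumes U: "U \<in> carrier_mat n r" and V: "V \<in> carrier_mat n r"
    and A: "A \<in> carrier_mat n n" and B: "B \<in> carrier_mat n n"
  shows "frob_inner (cproj n U * A * cproj n V) B = frob_inner A (cproj n U * B * cproj n V)"
proof -
  have RU: "cproj n U \<in> carrier_mat n n" and RV: "cproj n V \<in> carrier_mat n n"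
    using cproj_carrier U V by auto
  have "frob_inner (cproj n U * A * cproj n V) B = frob_inner (cproj n U * A) (B * transpose_mat (cproj n V))"
    by (rule fi_mult_right) (use RU RV A B in auto)
  also have "\<dots> = frob_inner A (transpose_mat (cproj n U) * (B * transpose_mat (cproj n V)))"
    by (rule fi_mult_left) (use RU RV A B in auto)
  also have "transpose_mat (cproj n U) * (B * transpose_mat (cproj n V)) = cproj n U * B * cproj n V"
    using cproj_sym[OF U] cproj_sym[OF V] RU RV B by (simp add: assoc_mult_mat[of _ n n _ n _ n])
  finally show ?thesis .
qed

lemma cproj_minus:
  assumes U: "U \<in> carrier_mat n r" and V: "V \<in> carrier_mat n r"
    and A: "A \<in> carrier_mat n n" and B: "B \<in> carrier_mat n n"
  shows "cproj n U * (A - B) * cproj n V = cproj n U * A * cproj n V - cproj n U * B * cproj n V"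
proof -
  have RU: "cproj n U \<in> carrier_mat n n" and RV: "cproj n V \<in> carrier_mat n n"
    using cproj_carrier U V by auto
  have "cproj n U * (A - B) = cproj n U * A - cproj n U * B"
    by (rule mult_minus_distrib_mat) (use RU A B in auto)
  moreover have "(cproj n U * A - cproj n U * B) * cproj n V = cproj n U * A * cproj n V - cproj n U * B * cproj n V"
    by (rule minus_mult_distrib_mat) (use RU RV A B in auto)
  ultimately show ?thesis by simp
qed

lemma ptf_minus:
  assumes U: "U \<in> carrier_mat n r" and V: "V \<in> carrier_mat n r"
    and A: "A \<in> carrier_mat n n" and B: "B \<in> carrier_mat n n"
  shows "ptf n U V (A - B) = ptf n U V A - ptf n U V B"
  unfolding ptf_def cproj_minus[OF assms] using A B cpc[OF U V A] cpc[OF U V B] cproj_carrier[OF U] cproj_carrier[OF V]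
  by (intro eq_matI) auto

lemma ptf_carrier:
  assumes U: "U \<in> carrier_mat n r" and V: "V \<in> carrier_mat n r" and A: "A \<in> carrier_mat n n"
  shows "ptf n U V A \<in> carrier_mat n n"
  using minus_carrier_mat[OF cpc[OF U V A]] by (simp add: ptf_def)

lemma pythag:
  assumes U: "U \<in> carrier_mat n r" and UU: "transpose_mat U * U = 1\<^sub>m r"
    and V: "V \<in> carrier_mat n r" and VV: "transpose_mat V * V = 1\<^sub>m r"
    and M: "M \<in> carrier_mat n n"
  shows "frob_norm (ptf n U V M) \<le> frob_norm M" "frob_norm (cproj n U * M * cproj n V) \<le> frob_norm M"
proof -
  define A where "A = ptf n U V M"
  define C where "C = cproj n U * M * cproj n V"
  have Ac: "A \<in> carrier_mat n n" using ptf_carrier[OF U V M] by (simp add: A_def)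
  have Cc: "C \<in> carrier_mat n n" using cpc[OF U V M] by (simp add: C_def)
  have MAC: "M = A + C" using Ac Cc M by (intro eq_matI) (auto simp: A_def C_def ptf_def)
  have o: "frob_inner C A = 0" unfolding C_def A_def by (rule compl_orth[OF U UU V VV M ptf_in_T[OF U V M]])
  have "frob_inner M M = frob_inner A A + 2 * frob_inner A C + frob_inner C C"
    unfolding MAC using Ac Cc by (simp add: fi_add_left[of _ n n] fi_add_right[of _ n n] fi_comm[OF Cc Ac])
  hence e: "frob_inner M M = frob_inner A A + frob_inner C C" using o fi_comm[OF Cc Ac] by simp
  have "frob_inner A A \<le> frob_inner M M" "frob_inner C C \<le> frob_inner M M"
    using e fi_self_nonneg[of A] fi_self_nonneg[of C] by linarith+
  thus "frob_norm (ptf n U V M) \<le> frob_norm M" "frob_norm (cproj n U * M * cproj n V) \<le> frob_norm M"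
    unfolding frob_norm_def A_def C_def by (auto intro: real_sqrt_le_mono)
qed

lemma frob_le_l1:
  assumes A: "A \<in> carrier_mat n m"
  shows "frob_norm A \<le> l1_norm A"
proof -
  let ?I = "{..<n} \<times> {..<m}"
  let ?f = "\<lambda>p. \<bar>A $$ p\<bar>"
  have fi: "frob_inner A A = (\<Sum>p\<in>?I. ?f p * ?f p)"
    using A by (simp add: fi_def' sum.cartesian_product abs_mult_self)
  have l1: "l1_norm A = (\<Sum>p\<in>?I. ?f p)"
    using A by (simp add: l1_norm_def sum.cartesian_product)
  have "(\<Sum>p\<in>?I. ?f p * ?f p) \<le> (\<Sum>p\<in>?I. \<Sum>q\<in>?I. ?f p * ?f q)"
  proof (rule sum_mono)
    fix p assume p: "p \<in> ?I"
    show "?f p * ?f p \<le> (\<Sum>q\<in>?I. ?f p * ?f q)"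
      by (rule member_le_sum[where f = "\<lambda>q. ?f p * ?f q", OF p]) auto
  qed
  also have "\<dots> = (l1_norm A)\<^sup>2" unfolding l1 by (simp add: power2_eq_square sum_product)
  finally have "frob_inner A A \<le> (l1_norm A)\<^sup>2" using fi by simp
  moreover have "l1_norm A \<ge> 0" unfolding l1 by (simp add: sum_nonneg)
  ultimately show ?thesis unfolding frob_norm_def using real_sqrt_le_mono by fastforce
qed

lemma W_compl:
  assumes U: "U \<in> carrier_mat n r" and UU: "transpose_mat U * U = 1\<^sub>m r"
    and V: "V \<in> carrier_mat n r" and VV: "transpose_mat V * V = 1\<^sub>m r"
    and W: "W \<in> carrier_mat n n" and W0: "orth_proj n (tangent_space n r U V) W = 0\<^sub>m n n"
  shows "W = cproj n U * W * cproj n V"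
proof -
  have "ptf n U V W = 0\<^sub>m n n" using W0 orth_proj_eq[OF U UU V VV W] by simp
  hence "W - ptf n U V W = W" using W by (intro eq_matI) auto
  thus ?thesis using ptf_compl[OF U V W] by simp
qed

lemma L0_compl:
  assumes U: "U \<in> carrier_mat n r" and UU: "transpose_mat U * U = 1\<^sub>m r"
    and V: "V \<in> carrier_mat n r" and Sig: "Sig \<in> carrier_mat r r"
  shows "cproj n U * (U * Sig * transpose_mat V) * cproj n V = 0\<^sub>m n n"
proof -
  have RU: "cproj n U \<in> carrier_mat n n" and RV: "cproj n V \<in> carrier_mat n n"
    using cproj_carrier U V by auto
  have "cproj n U * (U * Sig * transpose_mat V) = (cproj n U * U) * Sig * transpose_mat V"
    using RU U Sig V by (simp add: assoc_mult_mat[of _ n n _ r _ r] assoc_mult_mat[of _ n r _ r _ n]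
        assoc_mult_mat[of _ n n _ r _ n])
  also have "\<dots> = 0\<^sub>m n n" using cproj_U[OF U UU] Sig V by simp
  finally show ?thesis using RV by simp
qed

lemma L0_facts:
  assumes U: "U \<in> carrier_mat n r" and UU: "transpose_mat U * U = 1\<^sub>m r"
    and V: "V \<in> carrier_mat n r" and VV: "transpose_mat V * V = 1\<^sub>m r"
    and Sig: "Sig \<in> carrier_mat r r" "diagonal_mat Sig" "\<forall>i<r. Sig $$ (i,i) > 0"
  shows "frob_inner (U * transpose_mat V) (U * Sig * transpose_mat V) = (\<Sum>i<r. Sig $$ (i,i))"
    and "nuc_norm (U * Sig * transpose_mat V) \<le> (\<Sum>i<r. Sig $$ (i,i))"
proof -
  have UV: "U * transpose_mat V \<in> carrier_mat n n" using U V by simp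
  show "frob_inner (U * transpose_mat V) (U * Sig * transpose_mat V) = (\<Sum>i<r. Sig $$ (i,i))"
    using diag_formula[OF U Sig(1,2) V UV] col_UVT[OF U UU V VV] by simp
  have L0: "U * Sig * transpose_mat V \<in> carrier_mat n n" using U V Sig by simp
  obtain P S Q where s: "svd_of n (U * Sig * transpose_mat V) P S Q" using svd_of_exists[OF L0] by blast
  have o: "orthm n P" "orthm n Q" using s by (auto simp: svd_of_def)
  have Zc: "P * transpose_mat Q \<in> carrier_mat n n" using o by (auto simp: orthm_def)
  have "nuc_norm (U * Sig * transpose_mat V) = frob_inner (P * transpose_mat Q) (U * Sig * transpose_mat V)"
    using nuc_eq[OF s] svd_PQT[OF s] by simp
  also have "\<dots> = (\<Sum>i<r. Sig $$ (i,i) * (col U i \<bullet> ((P * transpose_mat Q) *\<^sub>v col V i)))"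
    using diag_formula[OF U Sig(1,2) V Zc] by simp
  also have "\<dots> \<le> (\<Sum>i<r. Sig $$ (i,i))"
  proof (rule sum_mono)
    fix i assume i: "i \<in> {..<r}"
    have "\<bar>col U i \<bullet> ((P * transpose_mat Q) *\<^sub>v col V i)\<bar> \<le> spec_norm (P * transpose_mat Q)"
      using spec_bilin[OF Zc] col_unit[OF U UU, of i] col_unit[OF V VV, of i] i by auto
    also have "\<dots> \<le> 1" by (rule spec_PQT[OF o])
    finally have "col U i \<bullet> ((P * transpose_mat Q) *\<^sub>v col V i) \<le> 1" by simp
    thus "Sig $$ (i,i) * (col U i \<bullet> ((P * transpose_mat Q) *\<^sub>v col V i)) \<le> Sig $$ (i,i)"
      using Sig(3) i by (simp add: mult_left_le)
  qed
  finally show "nuc_norm (U * Sig * transpose_mat V) \<le> (\<Sum>i<r. Sig $$ (i,i))" .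
qed

lemma n1_cases:
  assumes U: "U \<in> carrier_mat 1 r" and UU: "transpose_mat U * U = 1\<^sub>m r"
  shows "r = 0 \<or> cproj 1 U = 0\<^sub>m 1 1"
proof (cases "r = 0")
  case False
  have r0: "U $$ (0,0) * U $$ (0,0) = 1"
    using arg_cong[OF UU, of "\<lambda>A. A $$ (0,0)"] U False by (simp add: scalar_prod_def)
  have r1: "r = 1"
  proof (rule ccontr)
    assume "r \<noteq> 1" hence r2: "1 < r" using False by simp
    have a: "U $$ (0,0) * U $$ (0,1) = 0"
      using arg_cong[OF UU, of "\<lambda>A. A $$ (0,1)"] U r2 by (simp add: scalar_prod_def)
    have b: "U $$ (0,1) * U $$ (0,1) = 1"
      using arg_cong[OF UU, of "\<lambda>A. A $$ (1,1)"] U r2 by (simp add: scalar_prod_def)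
    from a r0 b show False by (metis mult_eq_0_iff zero_neq_one)
  qed
  have "cproj 1 U = 0\<^sub>m 1 1"
    using U r1 r0 by (intro eq_matI) (auto simp: cproj_def scalar_prod_def)
  thus ?thesis by simp
qed simp

lemma r0_ptf:
  assumes U: "U \<in> carrier_mat n 0" and V: "V \<in> carrier_mat n 0" and M: "M \<in> carrier_mat n n"
  shows "ptf n U V M = 0\<^sub>m n n"
proof -
  have "cproj n U = 1\<^sub>m n" "cproj n V = 1\<^sub>m n" using U V
    by (auto intro!: eq_matI simp: cproj_def scalar_prod_def)
  thus ?thesis using M by (simp add: ptf_def)
qed


lemma dsum_zero:
  fixes f :: "nat \<Rightarrow> nat \<Rightarrow> real"
  assumes "(\<Sum>i<n. \<Sum>j<m. f i j) = 0" "\<And>i j. f i j \<ge> 0" "i < n" "j < m"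
  shows "f i j = 0"
proof -
  have "\<forall>i\<in>{..<n}. (\<Sum>j<m. f i j) = 0"
    using assms(1) by (subst (asm) sum_nonneg_eq_0_iff) (auto intro: sum_nonneg assms(2))
  hence "(\<Sum>j<m. f i j) = 0" using assms(3) by auto
  hence "\<forall>j\<in>{..<m}. f i j = 0" by (subst (asm) sum_nonneg_eq_0_iff) (auto intro: assms(2))
  thus ?thesis using assms(4) by auto
qed

lemma fi_anti:
  assumes A: "A \<in> carrier_mat n n" and H: "H \<in> carrier_mat n n" and K: "K \<in> carrier_mat n n"
    and Az: "\<And>i j. i < n \<Longrightarrow> j < n \<Longrightarrow> (i,j) \<notin> Ob \<Longrightarrow> A $$ (i,j) = 0"
    and HK: "\<And>i j. i < n \<Longrightarrow> j < n \<Longrightarrow> (i,j) \<in> Ob \<Longrightarrow> H $$ (i,j) + K $$ (i,j) = 0"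
  shows "frob_inner A H = - frob_inner A K"
proof -
  have "frob_inner A H = (\<Sum>i<n. \<Sum>j<n. A $$ (i,j) * H $$ (i,j))" by (rule fi_def'[OF A])
  also have "\<dots> = (\<Sum>i<n. \<Sum>j<n. - (A $$ (i,j) * K $$ (i,j)))"
  proof (intro sum.cong refl)
    fix i j assume "i \<in> {..<n}" "j \<in> {..<n}"
    hence ij: "i < n" "j < n" by auto
    show "A $$ (i,j) * H $$ (i,j) = - (A $$ (i,j) * K $$ (i,j))"
    proof (cases "(i,j) \<in> Ob")
      case True
      hence "H $$ (i,j) = - K $$ (i,j)" using HK[OF ij] by (simp add: eq_neg_iff_add_eq_0)
      thus ?thesis by simp
    next
      case False thus ?thesis using Az[OF ij] by simp
    qed
  qed
  also have "\<dots> = - frob_inner A K" by (simp add: fi_def'[OF A] sum_negf)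
  finally show ?thesis .
qed

lemma max_norm_ge:
  assumes F: "F \<in> carrier_mat n m" and i: "i < n" and j: "j < m"
  shows "\<bar>F $$ (i,j)\<bar> \<le> max_norm F"
proof -
  let ?A = "{\<bar>F $$ (i,j)\<bar> | i j. i < dim_row F \<and> j < dim_col F} \<union> {0}"
  have "{\<bar>F $$ (i,j)\<bar> | i j. i < dim_row F \<and> j < dim_col F} \<subseteq> (\<lambda>(i,j). \<bar>F $$ (i,j)\<bar>) ` ({..<dim_row F} \<times> {..<dim_col F})"
    by auto
  hence fin: "finite ?A" by (meson finite_Un finite_SigmaI finite_imageI finite_insert finite_lessThan finite_subset finite.emptyI)
  have "\<bar>F $$ (i,j)\<bar> \<in> ?A" using F i j by auto
  thus ?thesis unfolding max_norm_def using fin by (rule Max_ge[rotated])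
qed

lemma abs_entry_ineq:
  fixes s k :: real
  shows "\<bar>s\<bar> + sgn s * k \<le> \<bar>s + k\<bar>"
  by (cases "s > 0"; cases "s < 0") (auto simp: sgn_if abs_if)

theorem lemma7p2:
  fixes n r :: nat and L0 U V Sig S0' W F D :: "real mat"
    and Omobs Om Gam :: "(nat \<times> nat) set" and lam :: real
  assumes L0: "L0 \<in> carrier_mat n n"
    and U: "U \<in> carrier_mat n r" and V: "V \<in> carrier_mat n r"
    and UU: "transpose_mat U * U = 1\<^sub>m r" and VV: "transpose_mat V * V = 1\<^sub>m r"
    and Sig_props: "Sig \<in> carrier_mat r r" "diagonal_mat Sig" "\<forall>i<r. Sig $$ (i,i) > 0"
    and svd: "L0 = U * Sig * transpose_mat V"
    and obs: "Omobs \<subseteq> {0..<n} \<times> {0..<n}"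
    and sub: "Om \<subseteq> Omobs"
    and Gam_def: "Gam = Omobs - Om"
    and S0: "S0' \<in> carrier_mat n n" "\<forall>i<n. \<forall>j<n. (i,j) \<notin> Om \<longrightarrow> S0' $$ (i,j) = 0"
    and PT: "\<And>M. M \<in> carrier_mat n n \<Longrightarrow>
        frob_norm (orth_proj n (tangent_space n r U V) (M - proj_idx Gam M))
        \<le> real n * frob_norm ((M - proj_idx Gam M)
              - orth_proj n (tangent_space n r U V) (M - proj_idx Gam M))"
    and lam_gt: "lam > 4 / real n"
    and WFD: "W \<in> carrier_mat n n" "F \<in> carrier_mat n n" "D \<in> carrier_mat n n"
    and eq: "U * transpose_mat V + W + orth_proj n (tangent_space n r U V) D
             = lam \<cdot>\<^sub>m (sgn_mat S0' + F)"
    and W0: "orth_proj n (tangent_space n r U V) W = 0\<^sub>m n n"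
    and Wn: "spec_norm W < 1/2"
    and F0: "F - proj_idx Gam F = 0\<^sub>m n n"
    and Fn: "max_norm F < 1/2"
    and Dn: "frob_norm (orth_proj n (tangent_space n r U V) D) \<le> 1 / (real n)^2"
  shows "proj_idx Omobs (L0 + S0') = proj_idx Omobs L0 + S0'
    \<and> (\<forall>L S. L \<in> carrier_mat n n \<and> S \<in> carrier_mat n n
          \<and> proj_idx Omobs (L + S) = proj_idx Omobs L0 + S0'
          \<and> nuc_norm L + lam * l1_norm S \<le> nuc_norm L0 + lam * l1_norm S0'
          \<longrightarrow> L = L0 \<and> S = S0')"
proof -
  have feas: "proj_idx Omobs (L0 + S0') = proj_idx Omobs L0 + S0'"
  proof (rule eq_matI)
    fix i j assume ij: "i < dim_row (proj_idx Omobs L0 + S0')" "j < dim_col (proj_idx Omobs L0 + S0')"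
    hence ij: "i < n" "j < n" using S0 by auto
    show "proj_idx Omobs (L0 + S0') $$ (i,j) = (proj_idx Omobs L0 + S0') $$ (i,j)"
      using ij L0 S0 sub by (auto simp: proj_idx_def)
  qed (use L0 S0 in \<open>auto simp: proj_idx_def\<close>)
  show ?thesis
  proof (cases "n = 0")
    case True
    show ?thesis
    proof (rule conjI[OF feas], intro allI impI)
      fix L S assume LS: "L \<in> carrier_mat n n \<and> S \<in> carrier_mat n n
          \<and> proj_idx Omobs (L + S) = proj_idx Omobs L0 + S0'
          \<and> nuc_norm L + lam * l1_norm S \<le> nuc_norm L0 + lam * l1_norm S0'"
      show "L = L0 \<and> S = S0'" using LS L0 S0 True by (auto intro!: eq_matI)
    qed
  next
    case False
    hence npos: "0 < n" by simp
    hence rn: "real n > 0" by simp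
    show ?thesis
    proof (rule conjI[OF feas], intro allI impI)
      fix L S assume LS: "L \<in> carrier_mat n n \<and> S \<in> carrier_mat n n
          \<and> proj_idx Omobs (L + S) = proj_idx Omobs L0 + S0'
          \<and> nuc_norm L + lam * l1_norm S \<le> nuc_norm L0 + lam * l1_norm S0'"
      hence Lc: "L \<in> carrier_mat n n" and Sc: "S \<in> carrier_mat n n"
        and cons: "proj_idx Omobs (L + S) = proj_idx Omobs L0 + S0'"
        and cost: "nuc_norm L + lam * l1_norm S \<le> nuc_norm L0 + lam * l1_norm S0'" by auto
      have lam0: "lam > 0" using lam_gt rn by (smt (verit) divide_pos_pos)
      define H where "H = L - L0"
      define K where "K = S - S0'"
      have Hc: "H \<in> carrier_mat n n" using L0 by (simp add: H_def minus_carrier_mat)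
      have Kc: "K \<in> carrier_mat n n" using S0 by (simp add: K_def minus_carrier_mat)
      have HK: "\<And>i j. i < n \<Longrightarrow> j < n \<Longrightarrow> (i,j) \<in> Omobs \<Longrightarrow> H $$ (i,j) + K $$ (i,j) = 0"
      proof -
        fix i j assume ij: "i < n" "j < n" "(i,j) \<in> Omobs"
        have "proj_idx Omobs (L + S) $$ (i,j) = (proj_idx Omobs L0 + S0') $$ (i,j)" using cons by simp
        thus "H $$ (i,j) + K $$ (i,j) = 0" using ij Lc Sc L0 S0 by (simp add: proj_idx_def H_def K_def)
      qed
      have Fz: "\<And>i j. i < n \<Longrightarrow> j < n \<Longrightarrow> (i,j) \<notin> Gam \<Longrightarrow> F $$ (i,j) = 0"
      proof -
        fix i j assume ij: "i < n" "j < n" "(i,j) \<notin> Gam"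
        have "(F - proj_idx Gam F) $$ (i,j) = 0" using F0 ij by simp
        thus "F $$ (i,j) = 0" using ij WFD by (simp add: proj_idx_def)
      qed
      have GamOb: "Gam \<subseteq> Omobs" using Gam_def by auto
      define RU where "RU = cproj n U"
      define RV where "RV = cproj n V"
      have RUc: "RU \<in> carrier_mat n n" and RVc: "RV \<in> carrier_mat n n"
        using cproj_carrier U V by (auto simp: RU_def RV_def)
      define X where "X = RU * H * RV"
      have Xc: "X \<in> carrier_mat n n" using cpc[OF U V Hc] by (simp add: X_def RU_def RV_def)
      obtain P Lm Q where svdX: "svd_of n X P Lm Q" using svd_of_exists[OF Xc] by blast
      have oP: "orthm n P" and oQ: "orthm n Q" using svdX by (auto simp: svd_of_def)
      have Pc: "P \<in> carrier_mat n n" and Qc: "Q \<in> carrier_mat n n" using oP oQ by (auto simp: orthm_def)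
      define N where "N = nuc_norm X"
      have N0: "N \<ge> 0" using nuc_nonneg[OF Xc] by (simp add: N_def)
      define c where "c = frob_norm X"
      have cN: "c \<le> N" using nuc_ge_frob[OF Xc] by (simp add: c_def N_def)
      have c0: "c \<ge> 0" using frob_norm_nonneg by (simp add: c_def)
      define W0 where "W0 = RU * (P * transpose_mat Q) * RV"
      have W0c: "W0 \<in> carrier_mat n n" unfolding W0_def using RUc RVc Pc Qc by (auto intro!: mult_carrier_mat)
      define Z where "Z = U * transpose_mat V + W0"
      have UVc: "U * transpose_mat V \<in> carrier_mat n n" using U V by simp
      have Zc: "Z \<in> carrier_mat n n" using UVc W0c by (simp add: Z_def)
      have specZ: "spec_norm Z \<le> 1"
        using spec_Z[OF U UU V VV oP oQ] by (simp add: Z_def W0_def RU_def RV_def)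
      have L0c: "RU * L0 * RV = 0\<^sub>m n n"
        using L0_compl[OF U UU V Sig_props(1)] svd by (simp add: RU_def RV_def)
      have LL: "L = L0 + H" using Lc L0 by (intro eq_matI) (auto simp: H_def)
      have "frob_inner Z L \<le> nuc_norm L"
      proof -
        have "frob_inner Z L \<le> spec_norm Z * nuc_norm L" using nuc_dual[OF Lc Zc] by simp
        also have "\<dots> \<le> 1 * nuc_norm L" using specZ nuc_nonneg[OF Lc] by (intro mult_right_mono) auto
        finally show ?thesis by simp
      qed
      moreover have "frob_inner Z L = frob_inner (U * transpose_mat V) L0 + frob_inner (U * transpose_mat V) H + N"
      proof -
        have "frob_inner Z L = frob_inner (U * transpose_mat V) L + frob_inner W0 L"
          unfolding Z_def by (rule fi_add_left[OF UVc W0c])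
        moreover have "frob_inner (U * transpose_mat V) L = frob_inner (U * transpose_mat V) L0 + frob_inner (U * transpose_mat V) H"
          unfolding LL by (rule fi_add_right[OF L0 Hc UVc])
        moreover have "frob_inner W0 L = N"
        proof -
          have "frob_inner W0 L = frob_inner (P * transpose_mat Q) (RU * L * RV)"
            unfolding W0_def RU_def RV_def using fi_cproj_move[OF U V _ Lc, of "P * transpose_mat Q"] Pc Qc by simp
          also have "RU * L * RV = X"
          proof -
            have "X = RU * L * RV - RU * L0 * RV"
              unfolding X_def H_def RU_def RV_def by (rule cproj_minus[OF U V Lc L0])
            thus ?thesis unfolding L0c using cpc[OF U V Lc] by (simp add: RU_def RV_def minus_zero_mat')
          qed
          also have "frob_inner (P * transpose_mat Q) X = N"
            using svd_PQT[OF svdX] nuc_eq[OF svdX] by (simp add: N_def)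
          finally show ?thesis .
        qed
        ultimately show ?thesis by simp
      qed
      moreover have "frob_inner (U * transpose_mat V) L0 \<ge> nuc_norm L0"
        using L0_facts[OF U UU V VV Sig_props] svd by simp
      ultimately have star1: "nuc_norm L \<ge> nuc_norm L0 + frob_inner (U * transpose_mat V) H + N" by simp
      define a where "a = (\<Sum>i<n. \<Sum>j<n. if (i,j) \<in> Gam then \<bar>K $$ (i,j)\<bar> else 0)"
      define b where "b = (\<Sum>i<n. \<Sum>j<n. if (i,j) \<notin> Omobs then \<bar>K $$ (i,j)\<bar> else 0)"
      have a0: "a \<ge> 0" unfolding a_def by (intro sum_nonneg) auto
      have b0: "b \<ge> 0" unfolding b_def by (intro sum_nonneg) auto
      have sgnc: "sgn_mat S0' \<in> carrier_mat n n" using S0 by (simp add: sgn_mat_def)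
      have star2: "l1_norm S \<ge> l1_norm S0' + frob_inner (sgn_mat S0') K + a + b"
      proof -
        have "l1_norm S0' + frob_inner (sgn_mat S0') K + a + b
          = (\<Sum>i<n. \<Sum>j<n. \<bar>S0' $$ (i,j)\<bar> + sgn (S0' $$ (i,j)) * K $$ (i,j)
               + (if (i,j) \<in> Gam then \<bar>K $$ (i,j)\<bar> else 0) + (if (i,j) \<notin> Omobs then \<bar>K $$ (i,j)\<bar> else 0))"
          using S0 by (simp add: l1_norm_def frob_inner_def sgn_mat_def a_def b_def sum.distrib)
        also have "\<dots> \<le> (\<Sum>i<n. \<Sum>j<n. \<bar>S $$ (i,j)\<bar>)"
        proof (intro sum_mono)
          fix i j assume "i \<in> {..<n}" "j \<in> {..<n}"
          hence ij: "i < n" "j < n" by auto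
          have Sij: "S $$ (i,j) = S0' $$ (i,j) + K $$ (i,j)" using ij Sc S0 by (simp add: K_def)
          show "\<bar>S0' $$ (i,j)\<bar> + sgn (S0' $$ (i,j)) * K $$ (i,j)
               + (if (i,j) \<in> Gam then \<bar>K $$ (i,j)\<bar> else 0) + (if (i,j) \<notin> Omobs then \<bar>K $$ (i,j)\<bar> else 0)
               \<le> \<bar>S $$ (i,j)\<bar>"
          proof (cases "(i,j) \<in> Om")
            case True
            hence "(i,j) \<notin> Gam" "(i,j) \<in> Omobs" using Gam_def sub by auto
            thus ?thesis using Sij abs_entry_ineq[of "S0' $$ (i,j)" "K $$ (i,j)"] by simp
          next
            case False
            hence "S0' $$ (i,j) = 0" using S0 ij by auto
            moreover have "\<not> ((i,j) \<in> Gam \<and> (i,j) \<notin> Omobs)" using GamOb by auto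
            ultimately show ?thesis using Sij by auto
          qed
        qed
        also have "\<dots> = l1_norm S" using Sc by (simp add: l1_norm_def)
        finally show ?thesis .
      qed
      define G where "G = orth_proj n (tangent_space n r U V) D"
      have Gptf: "G = ptf n U V D" using orth_proj_eq[OF U UU V VV WFD(3)] by (simp add: G_def)
      have Gc: "G \<in> carrier_mat n n" using ptf_carrier[OF U V WFD(3)] Gptf by simp
      have GT: "G \<in> tangent_space n r U V" using ptf_in_T[OF U V WFD(3)] Gptf by simp
      have star3: "frob_inner (U * transpose_mat V) H + frob_inner W H + frob_inner G H
          = lam * (frob_inner (sgn_mat S0') H + frob_inner F H)"
      proof -
        have "frob_inner (U * transpose_mat V + W + G) H = frob_inner (lam \<cdot>\<^sub>m (sgn_mat S0' + F)) H"
          using eq by (simp add: G_def)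
        moreover have "frob_inner (U * transpose_mat V + W + G) H
            = frob_inner (U * transpose_mat V) H + frob_inner W H + frob_inner G H"
          using UVc WFD Gc by (simp add: fi_add_left[of _ n n])
        moreover have "frob_inner (lam \<cdot>\<^sub>m (sgn_mat S0' + F)) H = lam * (frob_inner (sgn_mat S0') H + frob_inner F H)"
          using sgnc WFD by (simp add: fi_smult_left[of _ n n] fi_add_left[of _ n n])
        ultimately show ?thesis by simp
      qed
      have sgnz: "\<And>i j. i < n \<Longrightarrow> j < n \<Longrightarrow> (i,j) \<notin> Omobs \<Longrightarrow> sgn_mat S0' $$ (i,j) = 0"
      proof -
        fix i j assume ij: "i < n" "j < n" "(i,j) \<notin> Omobs"
        hence "(i,j) \<notin> Om" using sub by auto
        hence "S0' $$ (i,j) = 0" using S0(2) ij by auto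
        thus "sgn_mat S0' $$ (i,j) = 0" using ij S0(1) by (simp add: sgn_mat_def)
      qed
      have star4a: "frob_inner (sgn_mat S0') H = - frob_inner (sgn_mat S0') K"
        by (rule fi_anti[OF sgnc Hc Kc, of Omobs]) (use sgnz HK in auto)
      have star4b: "frob_inner F H = - frob_inner F K"
        by (rule fi_anti[OF WFD(2) Hc Kc, of Omobs]) (use Fz GamOb HK in auto)
      have star5: "frob_inner F K \<le> a / 2"
      proof -
        have "frob_inner F K = (\<Sum>i<n. \<Sum>j<n. F $$ (i,j) * K $$ (i,j))" by (rule fi_def'[OF WFD(2)])
        also have "\<dots> \<le> (\<Sum>i<n. \<Sum>j<n. (if (i,j) \<in> Gam then \<bar>K $$ (i,j)\<bar> else 0) / 2)"
        proof (intro sum_mono)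
          fix i j assume "i \<in> {..<n}" "j \<in> {..<n}"
          hence ij: "i < n" "j < n" by auto
          show "F $$ (i,j) * K $$ (i,j) \<le> (if (i,j) \<in> Gam then \<bar>K $$ (i,j)\<bar> else 0) / 2"
          proof (cases "(i,j) \<in> Gam")
            case True
            have "\<bar>F $$ (i,j)\<bar> \<le> 1/2" using max_norm_ge[OF WFD(2) ij] Fn by simp
            hence "\<bar>F $$ (i,j)\<bar> * \<bar>K $$ (i,j)\<bar> \<le> 1/2 * \<bar>K $$ (i,j)\<bar>"
              by (intro mult_right_mono) auto
            moreover have "F $$ (i,j) * K $$ (i,j) \<le> \<bar>F $$ (i,j)\<bar> * \<bar>K $$ (i,j)\<bar>"
              by (metis abs_ge_self abs_mult)
            ultimately have "F $$ (i,j) * K $$ (i,j) \<le> 1/2 * \<bar>K $$ (i,j)\<bar>" by linarith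
            thus ?thesis using True by simp
          next
            case False thus ?thesis using Fz[OF ij] by simp
          qed
        qed
        also have "\<dots> = a / 2" by (simp add: a_def sum_divide_distrib)
        finally show ?thesis .
      qed
      define w where "w = spec_norm W"
      have star6: "frob_inner W H \<le> w * N"
      proof -
        have Wc: "W = RU * W * RV" using W_compl[OF U UU V VV WFD(1) W0] by (simp add: RU_def RV_def)
        have "frob_inner W H = frob_inner (RU * W * RV) H" using Wc by simp
        also have "\<dots> = frob_inner W X"
          unfolding X_def RU_def RV_def by (rule fi_cproj_move[OF U V WFD(1) Hc])
        also have "\<dots> \<le> spec_norm W * nuc_norm X" using nuc_dual[OF Xc WFD(1)] by simp
        finally show ?thesis by (simp add: w_def N_def)
      qed
      define pH where "pH = ptf n U V H"
      have pHc: "pH \<in> carrier_mat n n" using ptf_carrier[OF U V Hc] by (simp add: pH_def)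
      have HpX: "H = pH + X"
        using Hc cpc[OF U V Hc] by (intro eq_matI) (auto simp: pH_def X_def RU_def RV_def ptf_def)
      have star7: "frob_inner G H \<le> 1 / (real n)^2 * frob_norm pH"
      proof -
        have "frob_inner G H = frob_inner G pH + frob_inner G X"
          unfolding HpX by (rule fi_add_right[OF pHc Xc Gc])
        moreover have "frob_inner G X = 0"
        proof -
          have "frob_inner X G = 0" unfolding X_def RU_def RV_def by (rule compl_orth[OF U UU V VV Hc GT])
          thus ?thesis using fi_comm[OF Gc Xc] by simp
        qed
        moreover have "frob_inner G pH \<le> frob_norm G * frob_norm pH" using fi_cs[OF Gc pHc] by simp
        moreover have "frob_norm G * frob_norm pH \<le> 1 / (real n)^2 * frob_norm pH"
          using Dn frob_norm_nonneg[of pH] by (intro mult_right_mono) (auto simp: G_def)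
        ultimately show ?thesis by simp
      qed
      define G' where "G' = proj_idx Gam H"
      have G'c: "G' \<in> carrier_mat n n" using Hc by (simp add: G'_def proj_idx_def)
      have fG': "frob_norm G' \<le> a"
      proof -
        have "frob_norm G' \<le> l1_norm G'" by (rule frob_le_l1[OF G'c])
        also have "l1_norm G' = a" unfolding l1_norm_def a_def
        proof -
          show "(\<Sum>i<dim_row G'. \<Sum>j<dim_col G'. \<bar>G' $$ (i, j)\<bar>) = (\<Sum>i<n. \<Sum>j<n. if (i,j) \<in> Gam then \<bar>K $$ (i,j)\<bar> else 0)"
            using G'c
          proof (simp, intro sum.cong refl)
            fix i j assume "i \<in> {..<n}" "j \<in> {..<n}"
            hence ij: "i < n" "j < n" by auto
            show "\<bar>G' $$ (i, j)\<bar> = (if (i,j) \<in> Gam then \<bar>K $$ (i,j)\<bar> else 0)"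
            proof (cases "(i,j) \<in> Gam")
              case True
              hence "H $$ (i,j) = - K $$ (i,j)" using HK[OF ij] GamOb by (auto simp: eq_neg_iff_add_eq_0)
              thus ?thesis using True ij Hc by (simp add: G'_def proj_idx_def)
            qed (use ij Hc in \<open>simp add: G'_def proj_idx_def\<close>)
          qed
        qed
        finally show ?thesis .
      qed
      have star8: "frob_norm pH \<le> real n * (c + a) + a"
      proof -
        define H' where "H' = H - G'"
        have H'c: "H' \<in> carrier_mat n n" using G'c by (simp add: H'_def minus_carrier_mat)
        have PTH: "frob_norm (ptf n U V H') \<le> real n * frob_norm (H' - ptf n U V H')"
          using PT[OF Hc] orth_proj_eq[OF U UU V VV H'c] by (simp add: H'_def G'_def)
        have e1: "H' - ptf n U V H' = X - RU * G' * RV"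
          using ptf_compl[OF U V H'c] cproj_minus[OF U V Hc G'c] by (simp add: H'_def X_def RU_def RV_def)
        have "frob_norm (X - RU * G' * RV) \<le> frob_norm X + frob_norm (RU * G' * RV)"
          by (rule frob_norm_minus[OF Xc]) (use cpc[OF U V G'c] in \<open>simp add: RU_def RV_def\<close>)
        also have "frob_norm (RU * G' * RV) \<le> frob_norm G'"
          using pythag(2)[OF U UU V VV G'c] by (simp add: RU_def RV_def)
        finally have f1: "frob_norm (H' - ptf n U V H') \<le> c + a" using e1 fG' by (simp add: c_def)
        have e2: "pH = ptf n U V H' + ptf n U V G'"
        proof -
          have "ptf n U V H' = pH - ptf n U V G'"
            unfolding H'_def pH_def by (rule ptf_minus[OF U V Hc G'c])
          thus ?thesis using pHc ptf_carrier[OF U V G'c] by (intro eq_matI) auto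
        qed
        have "frob_norm pH \<le> frob_norm (ptf n U V H') + frob_norm (ptf n U V G')"
          unfolding e2 by (rule frob_norm_triangle[OF ptf_carrier[OF U V H'c] ptf_carrier[OF U V G'c]])
        also have "\<dots> \<le> real n * (c + a) + a"
          using PTH f1 pythag(1)[OF U UU V VV G'c] fG' rn
          by (smt (verit, ccfv_SIG) mult_left_mono of_nat_0_le_iff)
        finally show ?thesis .
      qed
      have starD: "frob_inner G H \<le> N / 2 + 2 / real n * a"
      proof -
        have "1 / (real n)^2 * frob_norm pH \<le> N / 2 + 2 / real n * a"
        proof (cases "n \<ge> 2")
          case True
          hence n2: "real n \<ge> 2" by simp
          have "1 / (real n)^2 * frob_norm pH \<le> 1 / (real n)^2 * (real n * (c + a) + a)"
            using star8 by (intro mult_left_mono) auto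
          also have "\<dots> = c / real n + a / real n + a / (real n)^2"
            using rn by (simp add: field_simps power2_eq_square)
          also have "\<dots> \<le> N / 2 + 2 / real n * a"
          proof -
            have "c / real n \<le> c / 2" using n2 c0 by (intro divide_left_mono) auto
            moreover have "a / (real n)^2 \<le> a / real n"
              using n2 a0 by (intro divide_left_mono) (auto simp: power2_eq_square)
            moreover have "2 / real n * a = 2 * (a / real n)" by simp
            ultimately show ?thesis using cN by linarith
          qed
          finally show ?thesis .
        next
          case False
          hence n1: "n = 1" using npos by simp
          have "r = 0 \<or> cproj 1 U = 0\<^sub>m 1 1" using n1_cases[of U r] U UU n1 by simp
          thus ?thesis
          proof
            assume r0: "r = 0"
            have "pH = 0\<^sub>m n n" using r0_ptf[of U n V H] U V Hc r0 by (simp add: pH_def)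
            hence "frob_norm pH = 0" by (simp add: frob_norm_def frob_inner_def)
            thus ?thesis using N0 a0 rn by simp
          next
            assume "cproj 1 U = 0\<^sub>m 1 1"
            hence "X = 0\<^sub>m n n" using n1 Hc RVc by (simp add: X_def RU_def)
            hence "c = 0" by (simp add: c_def frob_norm_def frob_inner_def)
            thus ?thesis using star8 n1 N0 a0 by simp
          qed
        qed
        thus ?thesis using star7 by simp
      qed
      have g1: "lam * l1_norm S \<ge> lam * l1_norm S0' + lam * frob_inner (sgn_mat S0') K + lam * a + lam * b"
        using mult_left_mono[OF star2, of lam] lam0 by (simp add: algebra_simps)
      have g2: "lam * frob_inner F K \<le> lam * a / 2" using mult_left_mono[OF star5, of lam] lam0 by simp
      have g3: "frob_inner (U * transpose_mat V) H = - lam * frob_inner (sgn_mat S0') K - lam * frob_inner F K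
          - frob_inner W H - frob_inner G H"
        using star3 star4a star4b by (simp add: algebra_simps)
      have comb: "(1/2 - w) * N + (lam / 2 - 2 / real n) * a + lam * b \<le> 0"
        using cost star1 g1 g2 g3 star6 starD by (simp add: algebra_simps)
      have t1: "(1/2 - w) * N \<ge> 0" using Wn N0 by (simp add: w_def)
      have lam2: "lam / 2 - 2 / real n > 0" using lam_gt by simp
      have t2: "(lam / 2 - 2 / real n) * a \<ge> 0" using lam2 a0 by simp
      have t3: "lam * b \<ge> 0" using lam0 b0 by simp
      have "(1/2 - w) * N = 0" using comb t1 t2 t3 by linarith
      hence Nz: "N = 0" using Wn by (simp add: w_def)
      have "(lam / 2 - 2 / real n) * a = 0" using comb t1 t2 t3 by linarith
      hence az: "a = 0" using lam2 by simp
      have "lam * b = 0" using comb t1 t2 t3 by linarith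
      hence bz: "b = 0" using lam0 by simp
      have cz: "c = 0" using cN c0 Nz by simp
      hence Xz: "X = 0\<^sub>m n n" using frob_norm_zero[OF Xc] by (simp add: c_def)
      have "frob_norm pH \<le> 0" using star8 cz az by simp
      hence "pH = 0\<^sub>m n n" using frob_norm_zero[OF pHc] frob_norm_nonneg[of pH] by simp
      hence Hz: "H = 0\<^sub>m n n" using HpX Xz Hc by (intro eq_matI) auto
      have KG: "\<And>i j. i < n \<Longrightarrow> j < n \<Longrightarrow> (i,j) \<in> Gam \<Longrightarrow> K $$ (i,j) = 0"
      proof -
        fix i j assume ij: "i < n" "j < n" "(i,j) \<in> Gam"
        have "(if (i,j) \<in> Gam then \<bar>K $$ (i,j)\<bar> else 0) = 0"
          using dsum_zero[of "\<lambda>i j. if (i,j) \<in> Gam then \<bar>K $$ (i,j)\<bar> else 0" n n i j] az ij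
          by (simp add: a_def)
        thus "K $$ (i,j) = 0" using ij by simp
      qed
      have KO: "\<And>i j. i < n \<Longrightarrow> j < n \<Longrightarrow> (i,j) \<notin> Omobs \<Longrightarrow> K $$ (i,j) = 0"
      proof -
        fix i j assume ij: "i < n" "j < n" "(i,j) \<notin> Omobs"
        have "(if (i,j) \<notin> Omobs then \<bar>K $$ (i,j)\<bar> else 0) = 0"
          using dsum_zero[of "\<lambda>i j. if (i,j) \<notin> Omobs then \<bar>K $$ (i,j)\<bar> else 0" n n i j] bz ij
          by (simp add: b_def)
        thus "K $$ (i,j) = 0" using ij by simp
      qed
      have Kz: "\<And>i j. i < n \<Longrightarrow> j < n \<Longrightarrow> K $$ (i,j) = 0"
      proof -
        fix i j assume ij: "i < n" "j < n"
        show "K $$ (i,j) = 0"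
        proof (cases "(i,j) \<in> Omobs")
          case True
          thus ?thesis using HK[OF ij True] Hz ij by simp
        qed (use KO ij in auto)
      qed
      have "L = L0"
      proof (rule eq_matI)
        fix i j assume "i < dim_row L0" "j < dim_col L0"
        hence ij: "i < n" "j < n" using L0 by auto
        have "H $$ (i,j) = 0" using Hz ij by simp
        thus "L $$ (i,j) = L0 $$ (i,j)" using ij Lc L0 by (simp add: H_def)
      qed (use Lc L0 in auto)
      moreover have "S = S0'"
      proof (rule eq_matI)
        fix i j assume "i < dim_row S0'" "j < dim_col S0'"
        hence ij: "i < n" "j < n" using S0 by auto
        thus "S $$ (i,j) = S0' $$ (i,j)" using Kz[OF ij] Sc S0 by (simp add: K_def)
      qed (use Sc S0 in auto)
      ultimately show "L = L0 \<and> S = S0'" by simp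
    qed
  qed
qed


end
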